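(* Assume that, for scalars $\alpha>0,\gamma>0,\rho>0$, $Z_d=\mathrm{diag}(\mu I_n,\beta I_n,\pi I_n,\kappa I_n)>0$ and matrices $S>0$, $P>0$, the following hold: $$\begin{bmatrix}A^TS+SA+\rho S & \bullet\\ \alpha^{-1}G_0^TE^TS & -\rho P\end{bmatrix}<0,$$ $$A_K^TP+PA_K+P\begin{bmatrix}E_0^T\\ F_0^T\\ G_0\\ G_0\end{bmatrix}^T Z_d\begin{bmatrix}E_0^T\\ F_0^T\\ G_0\\ G_0\end{bmatrix}P+\begin{bmatrix}BK\\ \gamma^{-1}G_0\\ \alpha^{-1}DG_0\\ 0\end{bmatrix}^T Z_d^{-1}\begin{bmatrix}BK\\ \gamma^{-1}G_0\\ \alpha^{-1}DG_0\\ 0\end{bmatrix}+\rho P<0,\qquad \begin{bmatrix}\rho S & \bullet\\ C_0 & \kappa I_n\end{bmatrix}>0.$$ Then there exists a nonempty residual set $\mathbb{X}\subset\mathbb{R}^r\times\mathbb{R}^{2n}$ such that i) $(0,0)$ lies in its interior and ii) it is attained in finite time from any initial condition $(\zeta_0,x_0)\notin\mathbb{X}$.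
   Context: Consider the system $\dot\zeta=A\zeta+E\sigma$, $\dot\sigma=C\zeta+D\sigma+Bu+f(t)$ with $\zeta\in\mathbb{R}^r$, $\sigma\in\mathbb{R}^n$, $u\in\mathbb{R}^m$, $A$ Hurwitz, $B$ full row rank, $\|\dot f(t)\|\le\delta$. The control is $u=K_0\zeta+c(\sigma)K_1\sigma+K_2\eta$, $\dot\eta=c(\sigma)^2\sigma$, $c(\sigma)=1/\sqrt{\|\sigma\|}+\alpha$. With $BK_2$ nonsingular, $z=\eta+(BK_2)^{-1}f$, $x=[\sigma^T~z^T]^T$, $K=[K_1~K_2]$, $R(\sigma)=\mathrm{diag}(c(\sigma)I_n,I_n)$, $A_0=\begin{bmatrix}0&0\\ I_n&0\end{bmatrix}$, $B_0=\begin{bmatrix}B\\0\end{bmatrix}$, $A_K=A_0+B_0K$, $E_0=[(1/2)I_n~0]^T$, $F_0=[0~I_n]^T$, $G_0=[I_n~0]$, $C_0=C+BK_0$, and $\delta=\|(BK_2)^{-1}\|^{-1}\gamma^{-1}$. Lyapunov functions $v(\zeta)=\zeta^TS\zeta$, $V(x)=x^TR(\sigma)PR(\sigma)x$, and $\nu(\zeta,x)=\max\{v(\zeta),V(x)\}$. *)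

theory Defs
  imports "HOL-Analysis.Analysis"
begin

section \<open>Matrix notions (real matrices as Cartesian types)\<close>

text \<open>Positive definiteness M > 0: symmetric, and x^T M x > 0 for x nonzero.
  Negative definiteness M < 0 means -M > 0.\<close>
definition pos_def :: "real^'n^'n \<Rightarrow> bool" where
  "pos_def M \<longleftrightarrow> transpose M = M \<and> (\<forall>x. x \<noteq> 0 \<longrightarrow> x \<bullet> (M *v x) > 0)"

definition neg_def :: "real^'n^'n \<Rightarrow> bool" where
  "neg_def M \<longleftrightarrow> pos_def (- M)"

text \<open>Hurwitz: every (complex) eigenvalue has negative real part.\<close>
definition hurwitz :: "real^'n^'n \<Rightarrow> bool" where
  "hurwitz A \<longleftrightarrow> (\<forall>(l::complex) (v::complex^'n). v \<noteq> 0 \<and>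
      (\<chi> i j. complex_of_real (A$i$j)) *v v = l *s v \<longrightarrow> Re l < 0)"

text \<open>Block matrices [[M11, M12],[M21, M22]] and vector concatenation.\<close>
definition block2 ::
  "'a::zero^'b^'r \<Rightarrow> 'a^'c^'r \<Rightarrow> 'a^'b^'s \<Rightarrow> 'a^'c^'s \<Rightarrow> 'a^('b + 'c)^('r + 's)" where
  "block2 M11 M12 M21 M22 = (\<chi> i j. case i of
      Inl i' \<Rightarrow> (case j of Inl j' \<Rightarrow> M11$i'$j' | Inr j' \<Rightarrow> M12$i'$j')
    | Inr i' \<Rightarrow> (case j of Inl j' \<Rightarrow> M21$i'$j' | Inr j' \<Rightarrow> M22$i'$j'))"

text \<open>Vertical stacking [M1; M2] and horizontal stacking [M1 M2].\<close>
definition vstack :: "'a^'c^'r \<Rightarrow> 'a^'c^'s \<Rightarrow> 'a^'c^('r + 's)" where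
  "vstack M1 M2 = (\<chi> i. case i of Inl i' \<Rightarrow> M1$i' | Inr i' \<Rightarrow> M2$i')"

definition hstack :: "'a^'b^'r \<Rightarrow> 'a^'c^'r \<Rightarrow> 'a^('b + 'c)^'r" where
  "hstack M1 M2 = (\<chi> i j. case j of Inl j' \<Rightarrow> M1$i$j' | Inr j' \<Rightarrow> M2$i$j')"

definition vcat :: "'a^'b \<Rightarrow> 'a^'c \<Rightarrow> 'a^('b + 'c)" where
  "vcat x y = (\<chi> i. case i of Inl i' \<Rightarrow> x$i' | Inr i' \<Rightarrow> y$i')"

section \<open>The matrices of the paper\<close>

definition A0 :: "real^('n::finite + 'n)^('n + 'n)" where
  "A0 = block2 0 0 (mat 1) 0"

definition B0 :: "real^'m^'n \<Rightarrow> real^'m^('n + 'n)" where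
  "B0 B = vstack B 0"

definition Kmat :: "real^'n^'m \<Rightarrow> real^'n^'m \<Rightarrow> real^('n + 'n)^'m" where
  "Kmat K1 K2 = hstack K1 K2"

definition AK :: "real^'m^'n \<Rightarrow> real^'n^'m \<Rightarrow> real^'n^'m \<Rightarrow> real^('n::finite + 'n)^('n + 'n)" where
  "AK B K1 K2 = A0 + B0 B ** Kmat K1 K2"

definition E0 :: "real^'n::finite^('n + 'n)" where
  "E0 = vstack ((1/2) *\<^sub>R mat 1) 0"

definition F0 :: "real^'n::finite^('n + 'n)" where
  "F0 = vstack 0 (mat 1)"

definition G0 :: "real^('n::finite + 'n)^'n" where
  "G0 = hstack (mat 1) 0"

definition C0 :: "real^'r^'n \<Rightarrow> real^'m^'n \<Rightarrow> real^'r^'m \<Rightarrow> real^'r^'n" where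
  "C0 C B K0 = C + B ** K0"

text \<open>Z_d = diag(mu I_n, beta I_n, piz I_n, kappa I_n).\<close>
definition Zd :: "real \<Rightarrow> real \<Rightarrow> real \<Rightarrow> real \<Rightarrow> real^(('n::finite + 'n) + ('n + 'n))^(('n + 'n) + ('n + 'n))" where
  "Zd mu beta piz kappa =
     block2 (block2 (mu *\<^sub>R mat 1) 0 0 (beta *\<^sub>R mat 1)) 0
            0 (block2 (piz *\<^sub>R mat 1) 0 0 (kappa *\<^sub>R mat 1))"

text \<open>The stacked matrix [E0^T; F0^T; G0; G0].\<close>
definition Mstack :: "real^('n::finite + 'n)^(('n + 'n) + ('n + 'n))" where
  "Mstack = vstack (vstack (transpose E0) (transpose F0)) (vstack G0 G0)"

text \<open>The stacked matrix [B K; gamma^-1 G0; alpha^-1 D G0; 0].\<close>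
definition Nstack :: "real^'m^'n \<Rightarrow> real^'n^'m \<Rightarrow> real^'n^'m \<Rightarrow> real^'n^'n \<Rightarrow> real \<Rightarrow> real
    \<Rightarrow> real^('n + 'n)^(('n + 'n) + ('n + 'n))" where
  "Nstack B K1 K2 D gamma alpha =
     vstack (vstack (B ** Kmat K1 K2) ((1/gamma) *\<^sub>R G0))
            (vstack ((1/alpha) *\<^sub>R (D ** G0)) 0)"

section \<open>Closed-loop dynamics\<close>

definition cgain :: "real \<Rightarrow> real^'n \<Rightarrow> real" where
  "cgain alpha s = 1 / sqrt (norm s) + alpha"

text \<open>Solutions of the closed-loop system on [0,oo), in the sense of Filippov:
  the trajectory is absolutely continuous (integral of a locally absolutely integrable
  derivative) and the derivative satisfies, for almost every t >= 0, the Filippov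
  regularization of the right-hand side.  The only discontinuity of the right-hand side
  is the term c(sg)^2 sg in the eta-equation at sg = 0, whose Filippov set there
  is the closed unit ball; the term c(sg) K1 sg extends continuously by 0.\<close>
definition closed_loop_solution ::
  "real^'r^'r \<Rightarrow> real^'n^'r \<Rightarrow> real^'r^'n \<Rightarrow> real^'n^'n \<Rightarrow> real^'m^'n
   \<Rightarrow> real^'r^'m \<Rightarrow> real^'n^'m \<Rightarrow> real^'n^'m \<Rightarrow> real \<Rightarrow> (real \<Rightarrow> real^'n)
   \<Rightarrow> (real \<Rightarrow> real^'r) \<Rightarrow> (real \<Rightarrow> real^'n) \<Rightarrow> (real \<Rightarrow> real^'n) \<Rightarrow> bool" where
  "closed_loop_solution A E C D B K0 K1 K2 alpha f zeta sg eta \<longleftrightarrow>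
    (\<exists>dzeta dsg deta.
      (\<forall>t\<ge>0. dzeta absolutely_integrable_on {0..t} \<and>
              dsg absolutely_integrable_on {0..t} \<and>
              deta absolutely_integrable_on {0..t} \<and>
              zeta t = zeta 0 + integral {0..t} dzeta \<and>
              sg t = sg 0 + integral {0..t} dsg \<and>
              eta t = eta 0 + integral {0..t} deta) \<and>
      (AE t in lborel. 0 \<le> t \<longrightarrow>
         dzeta t = A *v zeta t + E *v sg t \<and>
         (if sg t \<noteq> 0 then
            dsg t = C *v zeta t + D *v sg t
              + B *v (K0 *v zeta t + cgain alpha (sg t) *\<^sub>R (K1 *v sg t) + K2 *v eta t)
              + f t
            \<and> deta t = (cgain alpha (sg t))\<^sup>2 *\<^sub>R sg t
          else
            dsg t = C *v zeta t + D *v sg t + B *v (K0 *v zeta t + K2 *v eta t) + f t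
            \<and> norm (deta t) \<le> 1)))"

end

theory Submission
  imports Defs
begin

definition lft :: "'a^('b::finite+'c::finite) \<Rightarrow> 'a^'b" where "lft x = (\<chi> i. x$Inl i)"
definition rgt :: "'a^('b::finite+'c::finite) \<Rightarrow> 'a^'c" where "rgt x = (\<chi> i. x$Inr i)"

lemma vcat_nth: "vcat a b $ i = (case i of Inl i' \<Rightarrow> a$i' | Inr i' \<Rightarrow> b$i')"
  unfolding vcat_def by simp

lemma vcat_Inl[simp]: "vcat a b $ Inl i = a$i"
  by (simp add: vcat_nth)
lemma vcat_Inr[simp]: "vcat a b $ Inr j = b$j"
  by (simp add: vcat_nth)

lemma vcat_split: "vcat (lft x) (rgt x) = x"
  unfolding vec_eq_iff vcat_nth lft_def rgt_def by (auto split: sum.split)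

lemma lft_vcat[simp]: "lft (vcat a b) = a" and rgt_vcat[simp]: "rgt (vcat a b) = b"
  by (simp_all add: vcat_nth lft_def rgt_def)

lemma vcat_add: "vcat a b + vcat c d = vcat (a + c) (b + d)"
  by (simp add: vec_eq_iff vcat_nth split: sum.split)
lemma vcat_diff: "vcat a b - vcat c d = vcat (a - c) (b - d)"
  by (simp add: vec_eq_iff vcat_nth split: sum.split)
lemma vcat_scaleR: "r *\<^sub>R vcat a b = vcat (r *\<^sub>R a) (r *\<^sub>R b)"
  by (simp add: vec_eq_iff vcat_nth split: sum.split)
lemma vcat_zero: "vcat 0 0 = 0"
  by (simp add: vec_eq_iff vcat_nth split: sum.split)
lemma vcat_uminus: "- vcat a b = vcat (-a) (-b)"
  by (simp add: vec_eq_iff vcat_nth split: sum.split)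

lemma sum_UNIV_plus: "(\<Sum>i\<in>(UNIV::('b::finite+'c::finite) set). f i) = (\<Sum>i\<in>UNIV. f (Inl i)) + (\<Sum>i\<in>UNIV. f (Inr i))"
proof -
  have "(\<Sum>i\<in>(UNIV::('b+'c) set). f i) = sum f (UNIV <+> UNIV)" by simp
  also have "\<dots> = (\<Sum>i\<in>UNIV. f (Inl i)) + (\<Sum>i\<in>UNIV. f (Inr i))"
    by (subst sum.Plus) (simp_all add: comp_def)
  finally show ?thesis .
qed

lemma inner_vcat: "vcat (a::real^'b::finite) (b::real^'c::finite) \<bullet> vcat c d = a \<bullet> c + b \<bullet> d"
  unfolding inner_vec_def by (simp add: sum_UNIV_plus)

lemma norm_vcat_sq: "norm (vcat (a::real^'b::finite) (b::real^'c::finite))^2 = norm a^2 + norm b^2"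
  by (simp add: power2_norm_eq_inner inner_vcat)

lemma block2_mult: "block2 M11 M12 M21 M22 *v vcat x y = vcat (M11 *v x + M12 *v y) (M21 *v x + M22 *v y)"
  unfolding vec_eq_iff
proof (intro allI)
  fix i show "(block2 M11 M12 M21 M22 *v vcat x y) $ i = vcat (M11 *v x + M12 *v y) (M21 *v x + M22 *v y) $ i"
    by (cases i) (simp_all add: block2_def matrix_vector_mult_def sum_UNIV_plus)
qed

lemma vstack_mult: "vstack M1 M2 *v x = vcat (M1 *v x) (M2 *v x)"
  unfolding vec_eq_iff
proof (intro allI)
  fix i show "(vstack M1 M2 *v x) $ i = vcat (M1 *v x) (M2 *v x) $ i"
    by (cases i) (simp_all add: vstack_def matrix_vector_mult_def)
qed

lemma hstack_mult: "hstack M1 M2 *v vcat x y = M1 *v x + M2 *v y"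
  by (simp add: hstack_def vec_eq_iff matrix_vector_mult_def sum_UNIV_plus)

lemma G0_mult: "G0 *v vcat x y = x"
  by (simp add: G0_def hstack_mult)

lemma dot_transpose: "(x::real^'a) \<bullet> (transpose M *v y) = (M *v x) \<bullet> y"
  by (simp, metis dot_lmul_matrix inner_commute)

lemma sym_vm: "transpose S = S \<Longrightarrow> (x::real^'a) v* S = S *v x"
  using vector_transpose_matrix[of x S] by simp

lemma mv_neg: "(- M) *v x = - (M *v (x::real^'a))"
  by (simp add: vec_eq_iff matrix_vector_mult_def sum_negf)

lemma mv_scaleR: "(k *\<^sub>R M) *v x = k *\<^sub>R (M *v (x::real^'a))"
  by (simp add: scaleR_matrix_vector_assoc)

lemma mv_assoc: "(A ** B) *v x = A *v (B *v x)"
  by (simp add: matrix_vector_mul_assoc)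

lemma pos_def_margin:
  fixes M :: "real^'n^'n"
  assumes "pos_def M"
  shows "\<exists>e>0. \<forall>x. e * norm x ^ 2 \<le> x \<bullet> (M *v x)"
proof -
  let ?f = "\<lambda>x::real^'n. x \<bullet> (M *v x)"
  have cont: "continuous_on (sphere 0 1) ?f"
    by (intro continuous_intros bounded_linear.continuous_on[OF matrix_vector_mul_bounded_linear])
  obtain i :: 'n where True by auto
  have "axis i (1::real) \<in> sphere (0::real^'n) 1" by simp
  hence ne: "sphere (0::real^'n) 1 \<noteq> {}" by blast
  obtain x0 where x0: "x0 \<in> sphere 0 1" "\<forall>y\<in>sphere 0 1. ?f x0 \<le> ?f y"
    using continuous_attains_inf[OF compact_sphere ne cont] by blast
  have "x0 \<noteq> 0" using x0(1) by auto
  hence epos: "?f x0 > 0" using assms unfolding pos_def_def by auto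
  show ?thesis
  proof (intro exI[of _ "?f x0"] conjI allI epos)
    fix x :: "real^'n"
    show "?f x0 * norm x ^ 2 \<le> ?f x"
    proof (cases "x = 0")
      case True thus ?thesis by simp
    next
      case False
      let ?u = "(1 / norm x) *\<^sub>R x"
      have "?u \<in> sphere 0 1" using False by (simp add: sphere_def)
      hence "?f x0 \<le> ?f ?u" using x0 by blast
      also have "?f ?u = ?f x / (norm x)^2"
        by (simp add: matrix_vector_mult_scaleR power2_eq_square)
      finally show ?thesis using False by (simp add: field_simps)
    qed
  qed
qed

lemma neg_def_le: "neg_def M \<Longrightarrow> x \<bullet> (M *v x) \<le> 0"
  unfolding neg_def_def pos_def_def
  by (cases "x = 0") (auto simp: mv_neg dest!: spec[of _ x])

lemma pos_def_ge: "pos_def M \<Longrightarrow> 0 \<le> x \<bullet> (M *v x)"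
  unfolding pos_def_def by (cases "x = 0") (auto dest!: spec[of _ x] intro: less_imp_le)

lemma quad_block2:
  fixes x :: "real^'a" and y :: "real^'b"
  shows "vcat x y \<bullet> (block2 M11 (transpose M21) M21 M22 *v vcat x y)
     = x \<bullet> (M11 *v x) + 2 * (y \<bullet> (M21 *v x)) + y \<bullet> (M22 *v y)"
  by (simp add: block2_mult inner_vcat inner_add_right, metis dot_lmul_matrix inner_commute)

lemma AK_mult: "AK B K1 K2 *v vcat a b = vcat (B *v (K1 *v a + K2 *v b)) (a::real^'n)"
  by (simp add: AK_def A0_def B0_def Kmat_def matrix_vector_mult_add_rdistrib mv_assoc
      block2_mult vstack_mult hstack_mult vcat_add)

lemma Kmat_mult: "Kmat K1 K2 *v vcat a b = K1 *v a + K2 *v (b::real^'n)"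
  by (simp add: Kmat_def hstack_mult)

lemma Mstack_mult: "Mstack *v p = vcat (vcat (transpose E0 *v p) (transpose F0 *v p)) (vcat (G0 *v p) (G0 *v (p::real^('n::finite+'n))))"
  by (simp only: Mstack_def vstack_mult)

lemma Zd_mult: "Zd mu beta piz kappa *v vcat (vcat w1 w2) (vcat w3 w4)
   = vcat (vcat (mu *\<^sub>R w1) (beta *\<^sub>R w2)) (vcat (piz *\<^sub>R w3) (kappa *\<^sub>R (w4::real^'n)))"
  by (simp add: Zd_def block2_mult mv_scaleR)

lemma Zd_quad: "vcat (vcat w1 w2) (vcat w3 w4) \<bullet> (Zd mu beta piz kappa *v vcat (vcat w1 w2) (vcat w3 w4))
   = mu * norm w1 ^ 2 + beta * norm w2 ^ 2 + piz * norm w3 ^ 2 + kappa * norm (w4::real^'n) ^ 2"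
  by (simp add: Zd_mult inner_vcat power2_norm_eq_inner)

lemma split4: "(w::real^(('n::finite+'n)+('n+'n))) = vcat (vcat (lft (lft w)) (rgt (lft w))) (vcat (lft (rgt w)) (rgt (rgt w)))"
  by (simp add: vcat_split)

lemma Zd_inv_mult: 
  assumes "mu \<noteq> 0" "beta \<noteq> 0" "piz \<noteq> 0" "kappa \<noteq> 0"
  shows "Zd mu beta piz kappa ** Zd (1/mu) (1/beta) (1/piz) (1/kappa) = (mat 1 :: real^(('n::finite+'n)+('n+'n))^(('n+'n)+('n+'n)))"
  unfolding matrix_eq
proof
  fix x :: "real^(('n+'n)+('n+'n))"
  show "(Zd mu beta piz kappa ** Zd (1/mu) (1/beta) (1/piz) (1/kappa)) *v x = mat 1 *v x"
  proof -
    obtain w1 w2 w3 w4 where x: "x = vcat (vcat w1 w2) (vcat w3 w4)" using split4 by blast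
    show ?thesis unfolding x using assms by (simp add: mv_assoc Zd_mult)
  qed
qed

lemma matrix_inv_eq:
  fixes A :: "real^'n^'n"
  assumes "A ** A' = mat 1" "A' ** A = mat 1"
  shows "matrix_inv A = A'"
  unfolding matrix_inv_def
proof (rule some_equality)
  show "A ** A' = mat 1 \<and> A' ** A = mat 1" using assms by simp
  fix X assume "A ** X = mat 1 \<and> X ** A = mat 1"
  hence "A' ** (A ** X) = A'" by simp
  thus "X = A'" by (simp add: matrix_mul_assoc assms)
qed

lemma Zd_inv:
  assumes "mu \<noteq> 0" "beta \<noteq> 0" "piz \<noteq> 0" "kappa \<noteq> 0"
  shows "matrix_inv (Zd mu beta piz kappa :: real^(('n::finite+'n)+('n+'n))^(('n+'n)+('n+'n))) = Zd (1/mu) (1/beta) (1/piz) (1/kappa)"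
proof (rule matrix_inv_eq)
  show "Zd mu beta piz kappa ** Zd (1/mu) (1/beta) (1/piz) (1/kappa) = (mat 1 :: real^(('n::finite+'n)+('n+'n))^(('n+'n)+('n+'n)))"
    using Zd_inv_mult assms by blast
  have "Zd (1/mu) (1/beta) (1/piz) (1/kappa) ** Zd (1/(1/mu)) (1/(1/beta)) (1/(1/piz)) (1/(1/kappa)) = (mat 1 :: real^(('n::finite+'n)+('n+'n))^(('n+'n)+('n+'n)))"
    using assms by (intro Zd_inv_mult) auto
  thus "Zd (1/mu) (1/beta) (1/piz) (1/kappa) ** Zd mu beta piz kappa = (mat 1 :: real^(('n::finite+'n)+('n+'n))^(('n+'n)+('n+'n)))"
    by simp
qed

lemma Nstack_mult: "Nstack B K1 K2 D gamma alpha *v vcat a b =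
   vcat (vcat (B *v (K1 *v a + K2 *v b)) ((1/gamma) *\<^sub>R a)) (vcat ((1/alpha) *\<^sub>R (D *v a)) (0::real^'n))"
  by (simp add: Nstack_def vstack_mult mv_assoc Kmat_mult mv_scaleR G0_mult)

lemma invertible_right: "invertible (M::real^'n^'n) \<Longrightarrow> M ** matrix_inv M = mat 1"
  unfolding invertible_def matrix_inv_def by (rule someI2_ex) auto

lemma dot_vm: "(x::real^'a) \<bullet> (y v* M) = (M *v x) \<bullet> y"
  by (metis dot_lmul_matrix inner_commute)

lemma sym_dot: "transpose P = P \<Longrightarrow> (x::real^'a) \<bullet> (P *v y) = (P *v x) \<bullet> y"
  by (metis dot_transpose)

lemma neg_def_margin:
  assumes "neg_def (M::real^'n^'n)"
  shows "\<exists>e>0. \<forall>x. x \<bullet> (M *v x) \<le> - e * norm x ^ 2"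
proof -
  obtain e where "e > 0" "\<forall>x. e * norm x ^ 2 \<le> x \<bullet> ((-M) *v x)"
    using pos_def_margin assms unfolding neg_def_def by blast
  hence "\<forall>x. x \<bullet> (M *v x) \<le> - e * norm x ^ 2" by (simp add: mv_neg) (metis le_minus_iff)
  thus ?thesis using \<open>e > 0\<close> by blast
qed

lemma LMI1_cons:
  fixes A S :: "real^'r^'r" and E :: "real^'n^'r" and P :: "real^('n+'n)^('n+'n)"
  assumes LMI1: "neg_def (block2
                 (transpose A ** S + S ** A + rho *\<^sub>R S)
                 (transpose ((1/alpha) *\<^sub>R (transpose G0 ** transpose E ** S)))
                 ((1/alpha) *\<^sub>R (transpose G0 ** transpose E ** S))
                 (- (rho *\<^sub>R P)))"
    and Ssym: "transpose S = S"
  shows "\<exists>e>0. \<forall>z xi. 2*((A*v z) \<bullet> (S*v z)) + rho*(z \<bullet> (S*v z)) + (2/alpha)*((E *v (G0 *v xi)) \<bullet> (S*v z))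
              - rho*(xi \<bullet> (P*v xi)) \<le> -e*(norm z^2 + norm xi^2)"
proof -
  obtain e where e: "e > 0" and h: "\<And>x. x \<bullet> ((block2
                 (transpose A ** S + S ** A + rho *\<^sub>R S)
                 (transpose ((1/alpha) *\<^sub>R (transpose G0 ** transpose E ** S)))
                 ((1/alpha) *\<^sub>R (transpose G0 ** transpose E ** S))
                 (- (rho *\<^sub>R P))) *v x) \<le> - e * norm x ^ 2"
    using neg_def_margin[OF LMI1] by blast
  show ?thesis
  proof (intro exI[of _ e] conjI allI e)
    fix z :: "real^'r" and xi :: "real^('n+'n)"
    have 1: "z \<bullet> ((transpose A ** S + S ** A + rho *\<^sub>R S) *v z) = 2*((A*v z) \<bullet> (S*v z)) + rho*(z \<bullet> (S*v z))"
    proof -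
      have a: "z \<bullet> ((transpose A ** S) *v z) = (A*v z) \<bullet> (S*v z)"
        by (simp only: mv_assoc dot_transpose)
      have b: "z \<bullet> ((S ** A) *v z) = (A*v z) \<bullet> (S*v z)"
        by (simp only: mv_assoc) (metis sym_dot[OF Ssym] inner_commute)
      show ?thesis by (simp add: matrix_vector_mult_add_rdistrib inner_add_right a b mv_scaleR)
    qed
    have 2: "xi \<bullet> (((1/alpha) *\<^sub>R (transpose G0 ** transpose E ** S)) *v z) = (1/alpha) * ((E *v (G0 *v xi)) \<bullet> (S*v z))"
    proof -
      have "xi \<bullet> ((transpose G0 ** transpose E ** S) *v z) = xi \<bullet> (transpose G0 *v (transpose E *v (S *v z)))"
        by (simp only: mv_assoc)
      also have "\<dots> = (G0 *v xi) \<bullet> (transpose E *v (S *v z))" by (simp only: dot_transpose)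
      also have "\<dots> = (E *v (G0 *v xi)) \<bullet> (S *v z)" by (simp only: dot_transpose)
      finally show ?thesis by (simp add: mv_scaleR)
    qed
    have 3: "xi \<bullet> ((- (rho *\<^sub>R P)) *v xi) = - rho * (xi \<bullet> (P *v xi))"
      by (simp add: mv_neg mv_scaleR)
    have "vcat z xi \<bullet> ((block2
                 (transpose A ** S + S ** A + rho *\<^sub>R S)
                 (transpose ((1/alpha) *\<^sub>R (transpose G0 ** transpose E ** S)))
                 ((1/alpha) *\<^sub>R (transpose G0 ** transpose E ** S))
                 (- (rho *\<^sub>R P))) *v vcat z xi) \<le> - e * norm (vcat z xi) ^ 2" by (rule h)
    thus "2*((A*v z) \<bullet> (S*v z)) + rho*(z \<bullet> (S*v z)) + (2/alpha)*((E *v (G0 *v xi)) \<bullet> (S*v z))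
              - rho*(xi \<bullet> (P*v xi)) \<le> -e*(norm z^2 + norm xi^2)"
      unfolding quad_block2 1 2 3 norm_vcat_sq by simp
  qed
qed

lemma LMI2_cons:
  fixes B :: "real^'m^'n" and K1 K2 :: "real^'n^'m" and D :: "real^'n^'n" and P :: "real^('n+'n)^('n+'n)"
  assumes LMI2: "neg_def (transpose (AK B K1 K2) ** P + P ** AK B K1 K2
                 + P ** transpose Mstack ** Zd mu beta piz kappa ** Mstack ** P
                 + transpose (Nstack B K1 K2 D gamma alpha) ** matrix_inv (Zd mu beta piz kappa)
                     ** Nstack B K1 K2 D gamma alpha
                 + rho *\<^sub>R P)"
    and Psym: "transpose P = P"
    and pos: "mu > 0" "beta > 0" "piz > 0" "kappa > 0"
  shows "2*((AK B K1 K2 *v xi) \<bullet> (P*v xi)) + (piz+kappa)*norm(G0 *v (P *v xi))^2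
          + norm(D *v (G0 *v xi))^2/(piz*alpha^2) + rho*(xi \<bullet> (P*v xi)) \<le> 0"
proof -
  obtain a b where xi: "xi = vcat a b" using vcat_split by metis
  let ?p = "P *v xi"
  have t1: "xi \<bullet> ((transpose (AK B K1 K2) ** P) *v xi) = (AK B K1 K2 *v xi) \<bullet> ?p"
    by (simp only: mv_assoc dot_transpose)
  have t2: "xi \<bullet> ((P ** AK B K1 K2) *v xi) = (AK B K1 K2 *v xi) \<bullet> ?p"
    by (simp only: mv_assoc) (metis sym_dot[OF Psym] inner_commute)
  have t3: "xi \<bullet> ((P ** transpose Mstack ** Zd mu beta piz kappa ** Mstack ** P) *v xi)
     = mu * norm (transpose E0 *v ?p) ^ 2 + beta * norm (transpose F0 *v ?p) ^ 2
       + piz * norm (G0 *v ?p) ^ 2 + kappa * norm (G0 *v ?p) ^ 2"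
  proof -
    have "xi \<bullet> ((P ** transpose Mstack ** Zd mu beta piz kappa ** Mstack ** P) *v xi)
       = xi \<bullet> (P *v (transpose Mstack *v (Zd mu beta piz kappa *v (Mstack *v ?p))))"
      by (simp only: mv_assoc)
    also have "\<dots> = ?p \<bullet> (transpose Mstack *v (Zd mu beta piz kappa *v (Mstack *v ?p)))"
      by (rule sym_dot[OF Psym])
    also have "\<dots> = (Mstack *v ?p) \<bullet> (Zd mu beta piz kappa *v (Mstack *v ?p))"
      by (rule dot_transpose)
    also have "\<dots> = mu * norm (transpose E0 *v ?p) ^ 2 + beta * norm (transpose F0 *v ?p) ^ 2
       + piz * norm (G0 *v ?p) ^ 2 + kappa * norm (G0 *v ?p) ^ 2"
      by (simp only: Mstack_mult Zd_quad)
    finally show ?thesis .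
  qed
  have t4: "xi \<bullet> ((transpose (Nstack B K1 K2 D gamma alpha) ** matrix_inv (Zd mu beta piz kappa)
                     ** Nstack B K1 K2 D gamma alpha) *v xi)
     = (1/mu) * norm (B *v (K1 *v a + K2 *v b)) ^ 2 + (1/beta) * norm ((1/gamma) *\<^sub>R a) ^ 2
       + (1/piz) * norm ((1/alpha) *\<^sub>R (D *v a)) ^ 2 + (1/kappa) * norm (0::real^'n) ^ 2"
  proof -
    have "xi \<bullet> ((transpose (Nstack B K1 K2 D gamma alpha) ** matrix_inv (Zd mu beta piz kappa)
                     ** Nstack B K1 K2 D gamma alpha) *v xi)
      = xi \<bullet> (transpose (Nstack B K1 K2 D gamma alpha) *v (matrix_inv (Zd mu beta piz kappa) *v (Nstack B K1 K2 D gamma alpha *v xi)))"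
      by (simp only: mv_assoc)
    also have "\<dots> = (Nstack B K1 K2 D gamma alpha *v xi) \<bullet> (matrix_inv (Zd mu beta piz kappa) *v (Nstack B K1 K2 D gamma alpha *v xi))"
      by (rule dot_transpose)
    also have "\<dots> = (Nstack B K1 K2 D gamma alpha *v xi) \<bullet> (Zd (1/mu) (1/beta) (1/piz) (1/kappa) *v (Nstack B K1 K2 D gamma alpha *v xi))"
      using pos by (simp add: Zd_inv)
    also have "\<dots> = (1/mu) * norm (B *v (K1 *v a + K2 *v b)) ^ 2 + (1/beta) * norm ((1/gamma) *\<^sub>R a) ^ 2
       + (1/piz) * norm ((1/alpha) *\<^sub>R (D *v a)) ^ 2 + (1/kappa) * norm (0::real^'n) ^ 2"
      unfolding xi Nstack_mult Zd_quad ..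
    finally show ?thesis .
  qed
  have t5: "xi \<bullet> ((rho *\<^sub>R P) *v xi) = rho * (xi \<bullet> ?p)" by (simp add: mv_scaleR)
  have "xi \<bullet> ((transpose (AK B K1 K2) ** P + P ** AK B K1 K2
                 + P ** transpose Mstack ** Zd mu beta piz kappa ** Mstack ** P
                 + transpose (Nstack B K1 K2 D gamma alpha) ** matrix_inv (Zd mu beta piz kappa)
                     ** Nstack B K1 K2 D gamma alpha
                 + rho *\<^sub>R P) *v xi) \<le> 0" by (rule neg_def_le[OF LMI2])
  hence tot: "2*((AK B K1 K2 *v xi) \<bullet> ?p) + (mu * norm (transpose E0 *v ?p) ^ 2 + beta * norm (transpose F0 *v ?p) ^ 2
       + piz * norm (G0 *v ?p) ^ 2 + kappa * norm (G0 *v ?p) ^ 2)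
       + ((1/mu) * norm (B *v (K1 *v a + K2 *v b)) ^ 2 + (1/beta) * norm ((1/gamma) *\<^sub>R a) ^ 2
       + (1/piz) * norm ((1/alpha) *\<^sub>R (D *v a)) ^ 2 + (1/kappa) * norm (0::real^'n) ^ 2)
       + rho * (xi \<bullet> ?p) \<le> 0"
    unfolding matrix_vector_mult_add_rdistrib inner_add_right t1 t2 t3 t4 t5 by simp
  have ga: "G0 *v xi = a" unfolding xi G0_mult ..
  have "norm ((1/alpha) *\<^sub>R (D *v a)) ^ 2 = norm (D *v a) ^ 2 / alpha^2"
    by (simp add: power_divide power_mult_distrib divide_inverse power_inverse)
  moreover have "0 \<le> mu * norm (transpose E0 *v ?p) ^ 2" "0 \<le> beta * norm (transpose F0 *v ?p) ^ 2"
    "0 \<le> (1/mu) * norm (B *v (K1 *v a + K2 *v b)) ^ 2" "0 \<le> (1/beta) * norm ((1/gamma) *\<^sub>R a) ^ 2"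
    using pos by auto
  ultimately show ?thesis using tot unfolding ga by (simp add: field_simps)
qed

lemma LMI3_cons:
  fixes S :: "real^'r^'r" and C0m :: "real^'r^'n"
  assumes LMI3: "pos_def (block2 (rho *\<^sub>R S) (transpose C0m) C0m (kappa *\<^sub>R mat 1))"
    and kpos: "kappa > 0"
  shows "norm (C0m *v z)^2 / kappa \<le> rho * (z \<bullet> (S *v z))"
proof -
  let ?w = "- (1/kappa) *\<^sub>R (C0m *v z)"
  have "0 \<le> vcat z ?w \<bullet> (block2 (rho *\<^sub>R S) (transpose C0m) C0m (kappa *\<^sub>R mat 1) *v vcat z ?w)"
    by (rule pos_def_ge[OF LMI3])
  also have "\<dots> = rho * (z \<bullet> (S *v z)) + 2 * (?w \<bullet> (C0m *v z)) + kappa * (?w \<bullet> ?w)"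
    unfolding quad_block2 by (simp add: mv_scaleR)
  also have "\<dots> = rho * (z \<bullet> (S *v z)) - norm (C0m *v z)^2 / kappa"
    using kpos by (simp add: power2_norm_eq_inner field_simps power2_eq_square flip: dot_square_norm) (metis dot_square_norm power2_eq_square)
  finally show ?thesis by simp
qed

lemma young:
  fixes u v :: "'a::real_inner"
  assumes "t > 0"
  shows "2 * (u \<bullet> v) \<le> t * norm u ^ 2 + norm v ^ 2 / t"
proof -
  have "0 \<le> norm (t *\<^sub>R u - v) ^ 2" by simp
  also have "norm (t *\<^sub>R u - v) ^ 2 = t^2 * norm u ^ 2 - 2 * t * (u \<bullet> v) + norm v ^ 2"
    by (simp only: power2_norm_eq_inner) (simp add: inner_diff_left inner_diff_right inner_commute algebra_simps power2_eq_square)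
  finally have "2 * t * (u \<bullet> v) \<le> t^2 * norm u ^ 2 + norm v ^ 2" by simp
  hence "2 * (u \<bullet> v) \<le> (t^2 * norm u ^ 2 + norm v ^ 2) / t" using assms by (simp add: field_simps)
  also have "\<dots> = t * norm u ^ 2 + norm v ^ 2 / t" using assms by (simp add: field_simps power2_eq_square)
  finally show ?thesis .
qed

lemma norm_vcat_le: "norm (vcat (a::real^'b::finite) (b::real^'c::finite)) \<le> norm a + norm b"
proof (rule power2_le_imp_le)
  show "norm (vcat a b)^2 \<le> (norm a + norm b)^2" unfolding norm_vcat_sq by (simp add: power2_sum)
qed simp

lemma norm_lft_le: "norm (a::real^'b::finite) \<le> norm (vcat a (b::real^'c::finite))"
  by (rule power2_le_imp_le) (simp_all add: norm_vcat_sq)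
lemma norm_rgt_le: "norm (b::real^'c::finite) \<le> norm (vcat (a::real^'b::finite) b)"
  by (rule power2_le_imp_le) (simp_all add: norm_vcat_sq)

lemma mvb: "norm (M *v x) \<le> onorm ((*v) M) * norm (x::real^'a)"
  by (rule onorm[OF matrix_vector_mul_bounded_linear])

lemma onorm_nn: "0 \<le> onorm ((*v) (M::real^'a^'b))"
  by (rule onorm_pos_le[OF matrix_vector_mul_bounded_linear])

lemma ptwise:
  fixes A S :: "real^'r^'r" and E :: "real^'n^'r" and C0m :: "real^'r^'n" and D :: "real^'n^'n"
    and B :: "real^'m^'n" and K1 K2 :: "real^'n^'m" and P :: "real^('n+'n)^('n+'n)"
  assumes Ssym: "transpose S = S" and Psym: "transpose P = P"
    and apos: "alpha > 0" and ppos: "piz > 0" and kpos: "kappa > 0"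
    and L1: "\<And>z xi. 2*((A*v z) \<bullet> (S*v z)) + rho*(z \<bullet> (S*v z)) + (2/alpha)*((E *v (G0 *v xi)) \<bullet> (S*v z))
              - rho*(xi \<bullet> (P*v xi)) \<le> -e*(norm z^2 + norm xi^2)"
    and L2: "\<And>xi. 2*((AK B K1 K2 *v xi) \<bullet> (P*v xi)) + (piz+kappa)*norm(G0 *v (P *v xi))^2
          + norm(D *v (G0 *v xi))^2/(piz*alpha^2) + rho*(xi \<bullet> (P*v xi)) \<le> 0"
    and L3: "\<And>z. norm (C0m *v z)^2 / kappa \<le> rho * (z \<bullet> (S *v z))"
    and dz_eq: "dzeta = A *v zeta + E *v sg"
    and ds_eq: "dsg = C0m *v zeta + D *v sg + alpha *\<^sub>R (B *v (K1 *v sg)) + B *v (K2 *v z) + rs"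
    and dz2: "dz = alpha^2 *\<^sub>R sg + rz"
  shows "2*(dzeta \<bullet> (S*v zeta)) + (2/alpha)*(vcat (alpha *\<^sub>R dsg) dz \<bullet> (P *v vcat (alpha *\<^sub>R sg) z))
     \<le> -e*(norm zeta^2 + norm (vcat (alpha *\<^sub>R sg) z)^2)
        + (2/alpha)*(vcat (alpha *\<^sub>R rs) rz \<bullet> (P *v vcat (alpha *\<^sub>R sg) z))"
proof -
  define xi where "xi = vcat (alpha *\<^sub>R sg) z"
  define p where "p = P *v xi"
  obtain p1 p2 where pp: "p = vcat p1 p2" using vcat_split by metis
  have Gp: "G0 *v p = p1" unfolding pp G0_mult ..
  have Gxi: "G0 *v xi = alpha *\<^sub>R sg" unfolding xi_def G0_mult ..
  have dxi: "vcat (alpha *\<^sub>R dsg) dz = alpha *\<^sub>R (AK B K1 K2 *v xi)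
      + vcat (D *v (alpha *\<^sub>R sg) + alpha *\<^sub>R (C0m *v zeta)) 0 + vcat (alpha *\<^sub>R rs) rz"
    unfolding xi_def AK_mult vcat_scaleR vcat_add ds_eq dz2
    by (simp add: algebra_simps matrix_vector_mult_scaleR power2_eq_square)
  have e1: "(2/alpha) * (vcat (alpha *\<^sub>R dsg) dz \<bullet> p) = 2 * ((AK B K1 K2 *v xi) \<bullet> p)
       + 2 * (p1 \<bullet> ((1/alpha) *\<^sub>R (D *v (alpha *\<^sub>R sg)))) + 2 * (p1 \<bullet> (C0m *v zeta))
       + (2/alpha) * (vcat (alpha *\<^sub>R rs) rz \<bullet> p)"
    unfolding dxi inner_add_left
    using apos by (simp add: pp inner_vcat inner_commute algebra_simps)
  have y1: "2 * (p1 \<bullet> ((1/alpha) *\<^sub>R (D *v (alpha *\<^sub>R sg)))) \<le> piz * norm p1 ^ 2 + norm ((1/alpha) *\<^sub>R (D *v (alpha *\<^sub>R sg)))^2 / piz"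
    by (rule young[OF ppos])
  have y2: "2 * (p1 \<bullet> (C0m *v zeta)) \<le> kappa * norm p1 ^ 2 + norm (C0m *v zeta)^2 / kappa"
    by (rule young[OF kpos])
  have nD: "norm ((1/alpha) *\<^sub>R (D *v (alpha *\<^sub>R sg)))^2 / piz = norm (D *v (G0 *v xi))^2 / (piz * alpha^2)"
    using apos unfolding Gxi by (simp add: power_divide power_mult_distrib divide_inverse power_inverse)
  have l2: "2*((AK B K1 K2 *v xi) \<bullet> p) + (piz+kappa)*norm p1^2
          + norm(D *v (G0 *v xi))^2/(piz*alpha^2) + rho*(xi \<bullet> p) \<le> 0"
    using L2[of xi] unfolding p_def[symmetric] Gp .
  have l1: "2*((A*v zeta) \<bullet> (S*v zeta)) + rho*(zeta \<bullet> (S*v zeta)) + (2/alpha)*((E *v (alpha *\<^sub>R sg)) \<bullet> (S*v zeta))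
              - rho*(xi \<bullet> p) \<le> -e*(norm zeta^2 + norm xi^2)"
    using L1[of zeta xi] unfolding p_def[symmetric] Gxi .
  have l3: "norm (C0m *v zeta)^2 / kappa \<le> rho * (zeta \<bullet> (S *v zeta))" by (rule L3)
  have dzS: "2*(dzeta \<bullet> (S*v zeta)) = 2*((A*v zeta) \<bullet> (S*v zeta)) + (2/alpha)*((E *v (alpha *\<^sub>R sg)) \<bullet> (S*v zeta))"
    using apos by (simp add: dz_eq inner_add_left matrix_vector_mult_scaleR)
  show ?thesis
    unfolding xi_def[symmetric] p_def[symmetric]
    using e1 y1 y2 nD l1 l2 l3 dzS by (simp add: algebra_simps)
qed

lemma has_integral_pair:
  assumes "(f has_integral a) S" "(g has_integral b) S"
  shows "((\<lambda>x. (f x, g x)) has_integral (a, b)) S"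
proof -
  have l1: "bounded_linear (\<lambda>v. (v, 0::'c))" by (intro bounded_linear_Pair bounded_linear_ident bounded_linear_zero)
  have l2: "bounded_linear (\<lambda>v. (0::'b, v))" by (intro bounded_linear_Pair bounded_linear_ident bounded_linear_zero)
  have h1: "((\<lambda>x. (f x, 0::'c)) has_integral (a, 0)) S"
    using has_integral_linear[OF assms(1) l1] by (simp add: o_def)
  have h2: "((\<lambda>x. (0::'b, g x)) has_integral (0, b)) S"
    using has_integral_linear[OF assms(2) l2] by (simp add: o_def)
  show ?thesis using has_integral_add[OF h1 h2] by simp
qed

lemma linear_vcat1: "bounded_linear (\<lambda>v::real^'b::finite. vcat v (0::real^'c::finite))"
  unfolding linear_conv_bounded_linear[symmetric]
  by (rule linearI) (simp_all add: vcat_add vcat_scaleR)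
lemma linear_vcat2: "bounded_linear (\<lambda>v::real^'c::finite. vcat (0::real^'b::finite) v)"
  unfolding linear_conv_bounded_linear[symmetric]
  by (rule linearI) (simp_all add: vcat_add vcat_scaleR)

lemma has_integral_vcat:
  fixes f :: "real \<Rightarrow> real^'b::finite" and g :: "real \<Rightarrow> real^'c::finite"
  assumes "(f has_integral a) S" "(g has_integral b) S"
  shows "((\<lambda>x. vcat (f x) (g x)) has_integral (vcat a b)) S"
proof -
  have h1: "((\<lambda>x. vcat (f x) (0::real^'c)) has_integral (vcat a 0)) S"
    using has_integral_linear[OF assms(1) linear_vcat1] by (simp add: o_def)
  have h2: "((\<lambda>x. vcat (0::real^'b) (g x)) has_integral (vcat 0 b)) S"
    using has_integral_linear[OF assms(2) linear_vcat2] by (simp add: o_def)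
  show ?thesis using has_integral_add[OF h1 h2] by (simp add: vcat_add)
qed

lemma vcat_eq_0: "vcat a b = 0 \<longleftrightarrow> a = 0 \<and> b = 0"
  by (metis vcat_zero lft_vcat rgt_vcat)

lemma Zd_params:
  assumes "pos_def (Zd mu beta piz kappa :: real^(('n::finite + 'n) + ('n + 'n))^(('n + 'n) + ('n + 'n)))"
  shows "mu > 0 \<and> beta > 0 \<and> piz > 0 \<and> kappa > 0"
proof -
  obtain i :: 'n where True by auto
  define e where "e = (axis i 1 :: real^'n)"
  have en: "norm e = 1" "e \<noteq> 0" by (simp_all add: e_def)
  have q: "\<And>w::real^(('n + 'n) + ('n + 'n)). w \<noteq> 0 \<Longrightarrow> 0 < w \<bullet> (Zd mu beta piz kappa *v w)"
    using assms unfolding pos_def_def by blast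
  have "0 < vcat (vcat e 0) (vcat 0 0) \<bullet> (Zd mu beta piz kappa *v vcat (vcat e 0) (vcat 0 (0::real^'n)))"
    by (rule q) (simp add: vcat_eq_0 en(2))
  hence "mu > 0" unfolding Zd_quad using en by simp
  moreover have "0 < vcat (vcat 0 e) (vcat 0 0) \<bullet> (Zd mu beta piz kappa *v vcat (vcat 0 e) (vcat 0 (0::real^'n)))"
    by (rule q) (simp add: vcat_eq_0 en(2))
  hence "beta > 0" unfolding Zd_quad using en by simp
  moreover have "0 < vcat (vcat 0 0) (vcat e 0) \<bullet> (Zd mu beta piz kappa *v vcat (vcat 0 0) (vcat e (0::real^'n)))"
    by (rule q) (simp add: vcat_eq_0 en(2))
  hence "piz > 0" unfolding Zd_quad using en by simp
  moreover have "0 < vcat (vcat 0 0) (vcat 0 e) \<bullet> (Zd mu beta piz kappa *v vcat (vcat 0 0) (vcat (0::real^'n) e))"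
    by (rule q) (simp add: vcat_eq_0 en(2))
  hence "kappa > 0" unfolding Zd_quad using en by simp
  ultimately show ?thesis by blast
qed

lemma decrease_lemma:
  fixes Y dY :: "real \<Rightarrow> 'a::euclidean_space" and q :: "'a \<Rightarrow> 'a" and N :: "real set" and c :: real
  assumes lin: "bounded_linear q" and sym: "\<And>a b. a \<bullet> q b = b \<bullet> q a" and psd: "\<And>a. 0 \<le> a \<bullet> q a"
    and hint: "\<And>t. t \<ge> 0 \<Longrightarrow> (dY has_integral (Y t - Y 0)) {0..t}"
    and negl: "negligible N"
    and bnd: "\<And>B. \<exists>M. \<forall>t. t \<ge> 0 \<longrightarrow> t \<notin> N \<longrightarrow> norm (Y t) \<le> B \<longrightarrow> norm (dY t) \<le> M"
    and dec: "\<And>t. t \<ge> 0 \<Longrightarrow> t \<notin> N \<Longrightarrow> c < Y t \<bullet> q (Y t) \<Longrightarrow> 2 * (dY t \<bullet> q (Y t)) \<le> -1"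
  shows "\<exists>t\<ge>0. Y t \<bullet> q (Y t) \<le> c"
proof (rule ccontr)
  have intg: "\<And>t. t \<ge> 0 \<Longrightarrow> dY integrable_on {0..t}" using hint by blast
  have sol: "\<And>t. t \<ge> 0 \<Longrightarrow> Y t = Y 0 + integral {0..t} dY"
    using hint integral_unique by (metis add.commute diff_add_cancel)
  assume "\<not> ?thesis"
  hence H: "\<And>t. t \<ge> 0 \<Longrightarrow> c < Y t \<bullet> q (Y t)" by (meson linorder_not_le)
  define L where "L t = Y t \<bullet> q (Y t)" for t
  define T where "T = 2 * L 0 + 1"
  have Tpos: "T > 0" using psd[of "Y 0"] by (simp add: T_def L_def)
  have cont: "continuous_on {0..T} Y"
  proof -
    have "continuous_on {0..T} (\<lambda>t. Y 0 + integral {0..t} dY)"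
      using continuous_on_add[OF continuous_on_const indefinite_integral_continuous_1[OF intg[of T]]] Tpos by simp
    thus ?thesis by (rule continuous_on_eq) (metis atLeastAtMost_iff sol)
  qed
  have "compact (Y ` {0..T})" by (intro compact_continuous_image cont compact_Icc)
  then obtain B where "\<forall>x\<in>Y ` {0..T}. norm x \<le> B"
    using compact_imp_bounded bounded_iff by blast
  hence B: "\<And>t. t \<in> {0..T} \<Longrightarrow> norm (Y t) \<le> B" by blast
  obtain M0 where M0: "\<And>t. t \<ge> 0 \<Longrightarrow> t \<notin> N \<Longrightarrow> norm (Y t) \<le> B \<Longrightarrow> norm (dY t) \<le> M0"
    using bnd[of B] by blast
  define M where "M = max M0 0"
  have Mpos: "M \<ge> 0" by (simp add: M_def)
  have dYb: "\<And>t. t \<in> {0..T} \<Longrightarrow> t \<notin> N \<Longrightarrow> norm (dY t) \<le> M"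
    using M0 B by (force simp: M_def)
  obtain Kq where Kq: "Kq > 0" "\<And>x. norm (q x) \<le> norm x * Kq"
    using bounded_linear.pos_bounded[OF lin] by blast
  have qadd: "\<And>x y. q (x + y) = q x + q y" using lin by (simp add: linear_add bounded_linear.linear)
  have qdiff: "\<And>x y. q (x - y) = q x - q y" using lin by (simp add: linear_diff bounded_linear.linear)
  have qscale: "\<And>r x. q (r *\<^sub>R x) = r *\<^sub>R q x" using lin by (simp add: linear_scale bounded_linear.linear)
  have diffint: "Y t - Y u = integral {u..t} dY" if "0 \<le> u" "u \<le> t" for u t
  proof -
    have "integral {0..u} dY + integral {u..t} dY = integral {0..t} dY"
      using Henstock_Kurzweil_Integration.integral_combine[of 0 u t dY] intg[of t] that by auto
    thus ?thesis using sol[of t] sol[of u] that by (simp add: algebra_simps)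
  qed
  define dY' where "dY' x = (if x \<in> N then 0 else dY x)" for x
  have lip: "norm (Y t - Y u) \<le> M * (t - u)" if "0 \<le> u" "u \<le> t" "t \<le> T" for u t
  proof -
    have i1: "dY integrable_on {u..t}"
      using integrable_subinterval_real[OF intg[of t], of u t] that by simp
    have "integral {u..t} dY = integral {u..t} dY'"
      by (rule integral_spike[OF negl]) (auto simp: dY'_def)
    moreover have "dY' integrable_on {u..t}"
      by (rule integrable_spike[OF i1 negl]) (auto simp: dY'_def)
    hence hi: "(dY' has_integral integral {u..t} dY') {u..t}" by (simp add: integrable_integral)
    have bd: "\<And>x. x \<in> {u..t} - {} \<Longrightarrow> norm (dY' x) \<le> M" using that Mpos dYb by (auto simp: dY'_def)
    have "norm (integral {u..t} dY') \<le> M * (t - u)"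
      using has_integral_bound_real[OF Mpos finite.emptyI hi bd] that by simp
    ultimately show ?thesis using diffint[of u t] that by simp
  qed
  define X where "X = M * M * Kq"
  have X0: "X \<ge> 0" using Mpos Kq(1) by (simp add: X_def)
  define h where "h = 1 / (2 * X + 1)"
  have hpos: "h > 0" using X0 by (simp add: h_def)
  have hM: "M * M * Kq * h \<le> 1/2"
  proof -
    have "M * M * Kq * h = X / (2 * X + 1)" by (simp add: h_def X_def)
    also have "\<dots> \<le> 1/2" using X0 by (simp add: divide_simps)
    finally show ?thesis .
  qed
  have step: "L t \<le> L s - (t - s) / 2" if "0 \<le> s" "s \<le> t" "t \<le> T" "t - s \<le> h" for s t
  proof -
    define v where "v = q (Y t + Y s)"
    have "L t - L s = (Y t - Y s) \<bullet> v"
      unfolding L_def v_def qadd by (simp add: inner_diff_left inner_add_right sym[of "Y t" "Y s"])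
    also have "\<dots> = integral {s..t} dY \<bullet> v" using diffint that by simp
    also have "\<dots> = integral {s..t} (\<lambda>u. dY u \<bullet> v)"
    proof -
      have i1: "dY integrable_on {s..t}"
        using integrable_subinterval_real[OF intg[of t], of s t] that by simp
      show ?thesis using integral_linear[OF i1 bounded_linear_inner_left[of v]] by (simp add: o_def)
    qed
    also have "\<dots> = integral {s..t} (\<lambda>u. if u \<in> N then -1/2 else dY u \<bullet> v)"
      by (rule integral_spike[OF negl]) auto
    also have "\<dots> \<le> integral {s..t} (\<lambda>u. -1/2 :: real)"
    proof (rule integral_le)
      have i1: "dY integrable_on {s..t}"
        using integrable_subinterval_real[OF intg[of t], of s t] that by simp
      have "(\<lambda>u. dY u \<bullet> v) integrable_on {s..t}"
        using integrable_linear[OF i1 bounded_linear_inner_left[of v]] by (simp add: o_def)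
      thus "(\<lambda>u. if u \<in> N then -1/2 else dY u \<bullet> v) integrable_on {s..t}"
        by (rule integrable_spike[OF _ negl]) auto
      show "(\<lambda>u. -1/2 :: real) integrable_on {s..t}" by (rule integrable_const_ivl)
      fix u assume u: "u \<in> {s..t}"
      show "(if u \<in> N then -1/2 else dY u \<bullet> v) \<le> -1/2"
      proof (cases "u \<in> N")
        case True thus ?thesis by simp
      next
        case False
        have u0: "u \<in> {0..T}" using u that by auto
        have dm: "norm (dY u) \<le> M" using dYb[OF u0 False] .
        have vsplit: "dY u \<bullet> v = 2 * (dY u \<bullet> q (Y u)) + dY u \<bullet> q (Y t - Y u) + dY u \<bullet> q (Y s - Y u)"
          unfolding v_def qadd qdiff by (simp add: inner_add_right inner_diff_right)
        have d1: "2 * (dY u \<bullet> q (Y u)) \<le> -1" using dec[OF _ False H] u0 by auto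
        have b1: "\<bar>dY u \<bullet> q (Y t - Y u)\<bar> \<le> M * (Kq * (M * (t - u)))"
        proof -
          have "\<bar>dY u \<bullet> q (Y t - Y u)\<bar> \<le> norm (dY u) * norm (q (Y t - Y u))" by (rule Cauchy_Schwarz_ineq2)
          also have "\<dots> \<le> M * (Kq * (M * (t - u)))"
          proof (rule mult_mono[OF dm])
            have "norm (q (Y t - Y u)) \<le> norm (Y t - Y u) * Kq" by (rule Kq(2))
            also have "\<dots> \<le> (M * (t - u)) * Kq" using lip[of u t] u that Kq by (intro mult_right_mono) auto
            finally show "norm (q (Y t - Y u)) \<le> Kq * (M * (t - u))" by (simp add: mult.commute)
          qed (use Mpos in auto)
          finally show ?thesis .
        qed
        have b2: "\<bar>dY u \<bullet> q (Y s - Y u)\<bar> \<le> M * (Kq * (M * (u - s)))"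
        proof -
          have "\<bar>dY u \<bullet> q (Y s - Y u)\<bar> \<le> norm (dY u) * norm (q (Y s - Y u))" by (rule Cauchy_Schwarz_ineq2)
          also have "\<dots> \<le> M * (Kq * (M * (u - s)))"
          proof (rule mult_mono[OF dm])
            have "norm (q (Y s - Y u)) \<le> norm (Y s - Y u) * Kq" by (rule Kq(2))
            also have "\<dots> = norm (Y u - Y s) * Kq" by (simp add: norm_minus_commute)
            also have "\<dots> \<le> (M * (u - s)) * Kq" using lip[of s u] u that Kq by (intro mult_right_mono) auto
            finally show "norm (q (Y s - Y u)) \<le> Kq * (M * (u - s))" by (simp add: mult.commute)
          qed (use Mpos in auto)
          finally show ?thesis .
        qed
        have "M * (Kq * (M * (t - u))) + M * (Kq * (M * (u - s))) = M * M * Kq * (t - s)"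
          by (simp add: algebra_simps)
        also have "\<dots> \<le> M * M * Kq * h" using that Mpos Kq by (intro mult_left_mono) auto
        finally have "M * (Kq * (M * (t - u))) + M * (Kq * (M * (u - s))) \<le> 1/2" using hM by linarith
        thus ?thesis using False vsplit d1 b1 b2 by (simp add: abs_le_iff)
      qed
    qed
    also have "\<dots> = - (t - s) / 2" using that by (simp add: field_simps)
    finally have "L t - L s \<le> - (t - s) / 2" .
    thus ?thesis by linarith
  qed
  define n :: nat where "n = nat (ceiling (T / h)) + 1"
  have npos: "n > 0" by (simp add: n_def)
  define d where "d = T / n"
  have dpos: "d > 0" using Tpos npos by (simp add: d_def)
  have dh: "d \<le> h"
  proof -
    have "T / h \<le> real n" unfolding n_def by linarith
    hence "T \<le> h * n" using hpos by (simp add: field_simps)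
    thus ?thesis using npos hpos by (simp add: d_def field_simps)
  qed
  have chain: "k \<le> n \<Longrightarrow> L (k * d) \<le> L 0 - (k * d) / 2" for k
  proof (induction k)
    case 0 thus ?case by simp
  next
    case (Suc k)
    have kd: "real (Suc k) * d \<le> T"
    proof -
      have "real (Suc k) * d \<le> real n * d" using Suc.prems dpos by (intro mult_right_mono) auto
      also have "\<dots> = T" using npos by (simp add: d_def)
      finally show ?thesis .
    qed
    have st: "L (real (Suc k) * d) \<le> L (real k * d) - (real (Suc k) * d - real k * d) / 2"
      by (rule step) (use kd dpos dh in \<open>auto simp: algebra_simps\<close>)
    have ih: "L (real k * d) \<le> L 0 - real k * d / 2" using Suc by simp
    have e: "real (Suc k) * d = real k * d + d" by (simp add: algebra_simps)
    have gen: "\<And>(a::real) (b::real) (c::real) (x::real) (y::real). a \<le> b - (x - y)/2 \<Longrightarrow> b \<le> c - y/2 \<Longrightarrow> a \<le> c - x/2" by (simp add: field_simps)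
    show ?case by (rule gen[OF st ih])
  qed
  have "L (real n * d) \<le> L 0 - (real n * d) / 2" by (rule chain) simp
  moreover have "real n * d = T" using npos by (simp add: d_def)
  ultimately have "L T \<le> L 0 - T / 2" by simp
  hence "L T < 0" using T_def by linarith
  moreover have "L T \<ge> 0" unfolding L_def by (rule psd)
  ultimately show False by simp
qed

lemma quad_upper: "(x::real^'a) \<bullet> (M *v x) \<le> onorm ((*v) M) * norm x ^ 2"
proof -
  have "x \<bullet> (M *v x) \<le> norm x * norm (M *v x)" by (rule norm_cauchy_schwarz)
  also have "\<dots> \<le> norm x * (onorm ((*v) M) * norm x)" by (intro mult_left_mono mvb) simp
  finally show ?thesis by (simp add: power2_eq_square mult_ac)
qed

lemma norm_vcat_scaled_sq: "norm (vcat (a *\<^sub>R lft x) (rgt x))^2 = a^2 * norm (lft x)^2 + norm (rgt (x::real^('b::finite+'c::finite)))^2"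
  by (simp add: norm_vcat_sq power_mult_distrib)

lemma norm_split_sq: "norm (x::real^('b::finite+'c::finite))^2 = norm (lft x)^2 + norm (rgt x)^2"
  by (metis norm_vcat_sq vcat_split)

lemma norm5: "norm (a + b + c + d + (e::'a::real_normed_vector)) \<le> norm a + norm b + norm c + norm d + norm e"
proof -
  have "norm (a + b + c + d + e) \<le> norm (a + b + c + d) + norm e" by (rule norm_triangle_ineq)
  moreover have "norm (a + b + c + d) \<le> norm (a + b + c) + norm d" by (rule norm_triangle_ineq)
  moreover have "norm (a + b + c) \<le> norm (a + b) + norm c" by (rule norm_triangle_ineq)
  moreover have "norm (a + b) \<le> norm a + norm b" by (rule norm_triangle_ineq)
  ultimately show ?thesis by linarith
qed

theorem corollary1:
  fixes A :: "real^'r^'r" and E :: "real^'n^'r" and C :: "real^'r^'n" and D :: "real^'n^'n"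
    and B :: "real^'m^'n" and K0 :: "real^'r^'m" and K1 K2 :: "real^'n^'m"
    and f f' :: "real \<Rightarrow> real^'n"
    and S :: "real^'r^'r" and P :: "real^('n + 'n)^('n + 'n)"
    and alpha gamma rho mu beta piz kappa :: real
  assumes hurwitz: "hurwitz A"
    and B_rank: "rank B = CARD('n)"
    and BK2_inv: "invertible (B ** K2)"
    and f_deriv: "\<forall>t\<ge>0. (f has_vector_derivative f' t) (at t within {0..})"
    and f_bound: "\<forall>t\<ge>0. norm (f' t) \<le> 1 / (onorm ((*v) (matrix_inv (B ** K2))) * gamma)"
    and alpha_pos: "alpha > 0" and gamma_pos: "gamma > 0" and rho_pos: "rho > 0"
    and Zd_pos: "pos_def (Zd mu beta piz kappa :: real^(('n + 'n) + ('n + 'n))^(('n + 'n) + ('n + 'n)))"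
    and S_pos: "pos_def S" and P_pos: "pos_def P"
    and LMI1: "neg_def (block2
                 (transpose A ** S + S ** A + rho *\<^sub>R S)
                 (transpose ((1/alpha) *\<^sub>R (transpose G0 ** transpose E ** S)))
                 ((1/alpha) *\<^sub>R (transpose G0 ** transpose E ** S))
                 (- (rho *\<^sub>R P)))"
    and LMI2: "neg_def (transpose (AK B K1 K2) ** P + P ** AK B K1 K2
                 + P ** transpose Mstack ** Zd mu beta piz kappa ** Mstack ** P
                 + transpose (Nstack B K1 K2 D gamma alpha) ** matrix_inv (Zd mu beta piz kappa)
                     ** Nstack B K1 K2 D gamma alpha
                 + rho *\<^sub>R P)"
    and LMI3: "pos_def (block2 (rho *\<^sub>R S) (transpose (C0 C B K0)) (C0 C B K0) (kappa *\<^sub>R mat 1))"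
  shows "\<exists>X :: ((real^'r) \<times> (real^('n + 'n))) set.
           X \<noteq> {} \<and> bounded X \<and> (0, 0) \<in> interior X \<and>
           (\<forall>zeta sg eta.
              closed_loop_solution A E C D B K0 K1 K2 alpha f zeta sg eta \<longrightarrow>
              (zeta 0, vcat (sg 0) (eta 0 + matrix_inv (B ** K2) *v f 0)) \<notin> X \<longrightarrow>
              (\<exists>T\<ge>0. (zeta T, vcat (sg T) (eta T + matrix_inv (B ** K2) *v f T)) \<in> X))"
proof -
  have Ssym: "transpose S = S" using S_pos unfolding pos_def_def by blast
  have Psym: "transpose P = P" using P_pos unfolding pos_def_def by blast
  have zp: "mu > 0" "beta > 0" "piz > 0" "kappa > 0" using Zd_params[OF Zd_pos] by auto
  obtain e where epos: "e > 0" and L1: "\<And>z xi. 2*((A*v z) \<bullet> (S*v z)) + rho*(z \<bullet> (S*v z))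
      + (2/alpha)*((E *v (G0 *v xi)) \<bullet> (S*v z)) - rho*(xi \<bullet> (P*v xi)) \<le> -e*(norm z^2 + norm xi^2)"
    using LMI1_cons[OF LMI1 Ssym] by blast
  have L2: "\<And>xi. 2*((AK B K1 K2 *v xi) \<bullet> (P*v xi)) + (piz+kappa)*norm(G0 *v (P *v xi))^2
          + norm(D *v (G0 *v xi))^2/(piz*alpha^2) + rho*(xi \<bullet> (P*v xi)) \<le> 0"
    by (rule LMI2_cons[OF LMI2 Psym zp])
  have L3: "\<And>z. norm (C0 C B K0 *v z)^2 / kappa \<le> rho * (z \<bullet> (S *v z))"
    by (rule LMI3_cons[OF LMI3 zp(4)])
  obtain eS where eS: "eS > 0" "\<And>x. eS * norm x ^ 2 \<le> x \<bullet> (S *v x)" using pos_def_margin[OF S_pos] by blast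
  obtain eP where eP: "eP > 0" "\<And>x. eP * norm x ^ 2 \<le> x \<bullet> (P *v x)" using pos_def_margin[OF P_pos] by blast
  define Minv where "Minv = matrix_inv (B ** K2)"
  have BKM: "(B ** K2) ** Minv = mat 1" using invertible_right[OF BK2_inv] by (simp add: Minv_def)
  define kP where "kP = onorm ((*v) P)"
  define kS where "kS = onorm ((*v) S)"
  define kr where "kr = onorm ((*v) (B ** K1))"
  define kM where "kM = onorm ((*v) Minv)"
  define Fb where "Fb = 1 / (onorm ((*v) (matrix_inv (B ** K2))) * gamma)"
  define k0 where "k0 = 1 + kM * max Fb 0"
  have kPn: "kP \<ge> 0" "kS \<ge> 0" "kr \<ge> 0" "kM \<ge> 0" by (simp_all add: kP_def kS_def kr_def kM_def onorm_nn)
  have k0n: "k0 \<ge> 1" using kPn by (simp add: k0_def)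
  define a0 where "a0 = 2 * kP * k0 / alpha"
  define a1 where "a1 = 2 * kP * (kr + 2) / sqrt alpha"
  have a01: "a0 \<ge> 0" "a1 \<ge> 0" using kPn k0n alpha_pos by (simp_all add: a0_def a1_def)
  define R where "R = max 1 (((a0 + a1 + 1) / e)^2)"
  have R1: "R \<ge> 1" by (simp add: R_def)
  define lam where "lam = kS + kP / alpha"
  have lamn: "lam \<ge> 0" using kPn alpha_pos by (simp add: lam_def)
  define c where "c = (lam + 1) * (R^2 + 1 + alpha^2)"
  have "0 < R^2 + 1 + alpha^2" using zero_le_power2[of R] zero_le_power2[of alpha] by linarith
  hence cpos: "c > 0" unfolding c_def using lamn by (intro mult_pos_pos) auto
  define Lf where "Lf z xi = z \<bullet> (S *v z) + (1/alpha) * (xi \<bullet> (P *v xi))" for z xi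
  have Lf_up: "\<And>(z::real^'r) (xi::real^('n+'n)). Lf z xi \<le> lam * (norm z^2 + norm xi^2)"
  proof -
    fix z :: "real^'r" and xi :: "real^('n+'n)"
    have "z \<bullet> (S *v z) \<le> kS * norm z^2" unfolding kS_def by (rule quad_upper)
    moreover have "xi \<bullet> (P *v xi) \<le> kP * norm xi^2" unfolding kP_def by (rule quad_upper)
    ultimately have "Lf z xi \<le> kS * norm z^2 + (1/alpha) * (kP * norm xi^2)"
      unfolding Lf_def using alpha_pos by (intro add_mono mult_left_mono) auto
    also have "\<dots> \<le> lam * (norm z^2 + norm xi^2)"
      using kPn alpha_pos by (simp add: lam_def algebra_simps)
    finally show "Lf z xi \<le> lam * (norm z^2 + norm xi^2)" .
  qed
  define mm where "mm = min eS (eP / alpha)"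
  have mmpos: "mm > 0" using eS eP alpha_pos by (simp add: mm_def)
  have Lf_low: "\<And>(z::real^'r) (xi::real^('n+'n)). mm * (norm z^2 + norm xi^2) \<le> Lf z xi"
  proof -
    fix z :: "real^'r" and xi :: "real^('n+'n)"
    have "mm * norm z^2 \<le> eS * norm z^2" unfolding mm_def by (intro mult_right_mono) auto
    moreover have "mm * norm xi^2 \<le> (eP/alpha) * norm xi^2" unfolding mm_def by (intro mult_right_mono) auto
    ultimately have "mm * (norm z^2 + norm xi^2) \<le> eS * norm z^2 + (eP/alpha) * norm xi^2"
      by (simp add: distrib_left)
    also have "\<dots> \<le> Lf z xi"
      unfolding Lf_def using eS(2)[of z] eP(2)[of xi] alpha_pos
      by (intro add_mono) (simp_all add: divide_simps mult.commute)
    finally show "mm * (norm z^2 + norm xi^2) \<le> Lf z xi" .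
  qed
  define Yof where "Yof p = (fst p, vcat (alpha *\<^sub>R lft (snd p)) (rgt (snd p)))" for p :: "(real^'r) \<times> (real^('n+'n))"
  define X where "X = {p. Lf (fst (Yof p)) (snd (Yof p)) \<le> c}"
  show ?thesis
  proof (intro exI[of _ X] conjI)
    have np2: "\<And>p::(real^'r) \<times> (real^('n+'n)). norm p ^ 2 = norm (fst p)^2 + norm (lft (snd p))^2 + norm (rgt (snd p))^2"
    proof -
      fix p :: "(real^'r) \<times> (real^('n+'n))"
      obtain a b where p: "p = (a, b)" by (cases p)
      show "norm p ^ 2 = norm (fst p)^2 + norm (lft (snd p))^2 + norm (rgt (snd p))^2"
        unfolding p norm_Pair by (simp add: norm_split_sq[of b])
    qed
    have ysq: "\<And>p. norm (snd (Yof p))^2 = alpha^2 * norm (lft (snd p))^2 + norm (rgt (snd p))^2"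
      unfolding Yof_def by (simp add: norm_vcat_scaled_sq)
    have Yup: "\<And>p. norm (fst (Yof p))^2 + norm (snd (Yof p))^2 \<le> (1 + alpha^2) * norm p^2"
    proof -
      fix p :: "(real^'r) \<times> (real^('n+'n))"
      have "0 \<le> alpha^2 * norm (fst p)^2" "0 \<le> norm (lft (snd p))^2" "0 \<le> alpha^2 * norm (rgt (snd p))^2" by simp_all
      thus "norm (fst (Yof p))^2 + norm (snd (Yof p))^2 \<le> (1 + alpha^2) * norm p^2"
        unfolding np2 ysq by (simp add: Yof_def algebra_simps)
    qed
    define m1 where "m1 = min 1 (alpha^2)"
    have m1pos: "m1 > 0" using alpha_pos by (simp add: m1_def)
    have Ylow: "\<And>p. m1 * norm p^2 \<le> norm (fst (Yof p))^2 + norm (snd (Yof p))^2"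
    proof -
      fix p :: "(real^'r) \<times> (real^('n+'n))"
      have "m1 * norm (fst p)^2 \<le> norm (fst p)^2" unfolding m1_def by (intro mult_left_le_one_le) auto
      moreover have "m1 * norm (lft (snd p))^2 \<le> alpha^2 * norm (lft (snd p))^2" unfolding m1_def by (intro mult_right_mono) auto
      moreover have "m1 * norm (rgt (snd p))^2 \<le> norm (rgt (snd p))^2" unfolding m1_def by (intro mult_left_le_one_le) auto
      ultimately show "m1 * norm p^2 \<le> norm (fst (Yof p))^2 + norm (snd (Yof p))^2"
        unfolding np2 ysq by (simp add: Yof_def algebra_simps)
    qed
    have inX: "\<And>p. norm p < 1 \<Longrightarrow> p \<in> X"
    proof -
      fix p :: "(real^'r) \<times> (real^('n+'n))" assume p1: "norm p < 1"
      have "Lf (fst (Yof p)) (snd (Yof p)) \<le> lam * (norm (fst (Yof p))^2 + norm (snd (Yof p))^2)" by (rule Lf_up)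
      also have "\<dots> \<le> lam * ((1 + alpha^2) * norm p^2)" using Yup lamn by (intro mult_left_mono) auto
      also have "\<dots> \<le> lam * ((1 + alpha^2) * 1)"
      proof -
        have "norm p ^ 2 \<le> 1" using p1 by (simp add: power_le_one)
        thus ?thesis using lamn by (intro mult_left_mono) (auto intro: add_nonneg_nonneg)
      qed
      also have "\<dots> \<le> c" unfolding c_def using lamn by (simp add: algebra_simps add_nonneg_nonneg)
      finally show "p \<in> X" by (simp add: X_def)
    qed
    show "X \<noteq> {}" using inX[of 0] by auto
    show "(0, 0) \<in> interior X"
    proof -
      have "ball (0, 0) 1 \<subseteq> X"
      proof
        fix p assume "p \<in> ball (0::real^'r, 0::real^('n+'n)) 1"
        hence "dist 0 p < 1" by (simp add: zero_prod_def)
        thus "p \<in> X" by (intro inX) (simp add: dist_0_norm)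
      qed
      thus ?thesis unfolding mem_interior by (intro exI[of _ 1]) auto
    qed
    show "bounded X"
      unfolding bounded_iff
    proof (intro exI[of _ "sqrt (c / (mm * m1))"] ballI)
      fix p assume "p \<in> X"
      hence "Lf (fst (Yof p)) (snd (Yof p)) \<le> c" by (simp add: X_def)
      moreover have "mm * (m1 * norm p^2) \<le> mm * (norm (fst (Yof p))^2 + norm (snd (Yof p))^2)"
        using Ylow mmpos by (intro mult_left_mono) auto
      ultimately have "mm * m1 * norm p^2 \<le> c" using Lf_low[of "fst (Yof p)" "snd (Yof p)"] by (simp add: mult.assoc)
      hence "norm p^2 \<le> c / (mm * m1)" using mmpos m1pos by (simp add: field_simps)
      thus "norm p \<le> sqrt (c / (mm * m1))" by (rule real_le_rsqrt)
    qed
    show "\<forall>zeta sg eta.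
              closed_loop_solution A E C D B K0 K1 K2 alpha f zeta sg eta \<longrightarrow>
              (zeta 0, vcat (sg 0) (eta 0 + matrix_inv (B ** K2) *v f 0)) \<notin> X \<longrightarrow>
              (\<exists>T\<ge>0. (zeta T, vcat (sg T) (eta T + matrix_inv (B ** K2) *v f T)) \<in> X)"
    proof (intro allI impI)
      fix zeta :: "real \<Rightarrow> real^'r" and sg eta :: "real \<Rightarrow> real^'n"
      assume cls: "closed_loop_solution A E C D B K0 K1 K2 alpha f zeta sg eta"
      obtain dzeta dsg deta where
        H1: "\<forall>t\<ge>0. dzeta absolutely_integrable_on {0..t} \<and>
              dsg absolutely_integrable_on {0..t} \<and>
              deta absolutely_integrable_on {0..t} \<and>
              zeta t = zeta 0 + integral {0..t} dzeta \<and>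
              sg t = sg 0 + integral {0..t} dsg \<and>
              eta t = eta 0 + integral {0..t} deta" and
        H2: "AE t in lborel. 0 \<le> t \<longrightarrow>
         dzeta t = A *v zeta t + E *v sg t \<and>
         (if sg t \<noteq> 0 then
            dsg t = C *v zeta t + D *v sg t
              + B *v (K0 *v zeta t + cgain alpha (sg t) *\<^sub>R (K1 *v sg t) + K2 *v eta t)
              + f t
            \<and> deta t = (cgain alpha (sg t))\<^sup>2 *\<^sub>R sg t
          else
            dsg t = C *v zeta t + D *v sg t + B *v (K0 *v zeta t + K2 *v eta t) + f t
            \<and> norm (deta t) \<le> 1)"
        using cls unfolding closed_loop_solution_def by blast
      obtain N where N1: "{x \<in> space lborel. \<not> (0 \<le> x \<longrightarrow>
         dzeta x = A *v zeta x + E *v sg x \<and>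
         (if sg x \<noteq> 0 then
            dsg x = C *v zeta x + D *v sg x
              + B *v (K0 *v zeta x + cgain alpha (sg x) *\<^sub>R (K1 *v sg x) + K2 *v eta x)
              + f x
            \<and> deta x = (cgain alpha (sg x))\<^sup>2 *\<^sub>R sg x
          else
            dsg x = C *v zeta x + D *v sg x + B *v (K0 *v zeta x + K2 *v eta x) + f x
            \<and> norm (deta x) \<le> 1))} \<subseteq> N"
        and N2: "emeasure lborel N = 0" and N3: "N \<in> sets lborel"
        using AE_E[OF H2] by blast
      have negl: "negligible N"
        unfolding negligible_iff_null_sets using N2 N3 by (intro null_sets_completionI null_setsI)
      have HN: "\<And>t. 0 \<le> t \<Longrightarrow> t \<notin> N \<Longrightarrow> dzeta t = A *v zeta t + E *v sg t \<and>
         (if sg t \<noteq> 0 then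
            dsg t = C *v zeta t + D *v sg t
              + B *v (K0 *v zeta t + cgain alpha (sg t) *\<^sub>R (K1 *v sg t) + K2 *v eta t)
              + f t
            \<and> deta t = (cgain alpha (sg t))\<^sup>2 *\<^sub>R sg t
          else
            dsg t = C *v zeta t + D *v sg t + B *v (K0 *v zeta t + K2 *v eta t) + f t
            \<and> norm (deta t) \<le> 1)"
        using N1 by auto
      define z where "z t = eta t + Minv *v f t" for t
      define dz where "dz t = deta t + Minv *v f' t" for t
      define rs where "rs t = dsg t - (C0 C B K0 *v zeta t + D *v sg t + alpha *\<^sub>R (B *v (K1 *v sg t)) + B *v (K2 *v z t))" for t
      define rz where "rz t = dz t - alpha^2 *\<^sub>R sg t" for t
      have PT: "\<And>t. 0 \<le> t \<Longrightarrow> t \<notin> N \<Longrightarrow> dzeta t = A *v zeta t + E *v sg t \<and>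
          norm (rs t) \<le> kr * sqrt (norm (sg t)) \<and> norm (rz t) \<le> k0 + 2 * alpha * sqrt (norm (sg t))"
      proof -
        fix t :: real assume t0: "0 \<le> t" and tN: "t \<notin> N"
        note ode = HN[OF t0 tN]
        have Bz: "B *v (K2 *v z t) = B *v (K2 *v eta t) + f t"
        proof -
          have "B *v (K2 *v (Minv *v f t)) = ((B ** K2) ** Minv) *v f t" by (simp add: matrix_vector_mul_assoc matrix_mul_assoc)
          thus ?thesis by (simp add: z_def matrix_vector_right_distrib BKM)
        qed
        have C0z: "C0 C B K0 *v zeta t = C *v zeta t + B *v (K0 *v zeta t)"
          by (simp add: C0_def matrix_vector_mult_add_rdistrib mv_assoc)
        have fM: "norm (Minv *v f' t) \<le> kM * max Fb 0"
        proof -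
          have "norm (Minv *v f' t) \<le> kM * norm (f' t)" unfolding kM_def by (rule mvb)
          also have "\<dots> \<le> kM * max Fb 0" using f_bound t0 kPn by (intro mult_left_mono) (auto simp: Fb_def)
          finally show ?thesis .
        qed
        let ?s = "norm (sg t)"
        have rsz: "norm (rs t) \<le> kr * sqrt ?s \<and> norm (rz t) \<le> k0 + 2 * alpha * sqrt ?s"
        proof (cases "sg t = 0")
          case True
          with ode have d1: "dsg t = C *v zeta t + D *v sg t + B *v (K0 *v zeta t + K2 *v eta t) + f t"
            and d2: "norm (deta t) \<le> 1" by auto
          have "rs t = 0" unfolding rs_def d1 Bz C0z using True
            by (simp add: matrix_vector_right_distrib algebra_simps)
          moreover have "rz t = deta t + Minv *v f' t" using True by (simp add: rz_def dz_def)
          moreover have "norm (deta t + Minv *v f' t) \<le> k0"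
            using norm_triangle_ineq[of "deta t" "Minv *v f' t"] d2 fM by (simp add: k0_def)
          ultimately show ?thesis using True alpha_pos by simp
        next
          case False
          define cg where "cg = cgain alpha (sg t)"
          have spos: "?s > 0" using False by simp
          have cg_eq: "cg = 1 / sqrt ?s + alpha" by (simp add: cg_def cgain_def)
          from ode False have d1: "dsg t = C *v zeta t + D *v sg t
              + B *v (K0 *v zeta t + cg *\<^sub>R (K1 *v sg t) + K2 *v eta t) + f t"
            and d2: "deta t = cg\<^sup>2 *\<^sub>R sg t" by (auto simp: cg_def)
          have rs_eq: "rs t = (1 / sqrt ?s) *\<^sub>R ((B ** K1) *v sg t)"
            unfolding rs_def d1 Bz C0z cg_eq
            by (simp add: matrix_vector_right_distrib matrix_vector_mult_scaleR mv_assoc algebra_simps)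
          have "norm (rs t) = (1 / sqrt ?s) * norm ((B ** K1) *v sg t)" by (simp add: rs_eq)
          also have "\<dots> \<le> (1 / sqrt ?s) * (kr * ?s)"
            unfolding kr_def by (intro mult_left_mono mvb) simp
          also have "\<dots> = kr * sqrt ?s" using spos by (simp add: field_simps real_div_sqrt)
          finally have n1: "norm (rs t) \<le> kr * sqrt ?s" .
          have rz_eq: "rz t = (cg\<^sup>2 - alpha^2) *\<^sub>R sg t + Minv *v f' t"
            by (simp add: rz_def dz_def d2 algebra_simps)
          have cgd: "cg\<^sup>2 - alpha^2 = 1 / ?s + 2 * alpha / sqrt ?s"
            using spos by (simp add: cg_eq power2_eq_square field_simps)
          have cgn: "cg\<^sup>2 - alpha^2 \<ge> 0" unfolding cgd using spos alpha_pos by simp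
          have "norm ((cg\<^sup>2 - alpha^2) *\<^sub>R sg t) = (1 / ?s + 2 * alpha / sqrt ?s) * ?s"
            using cgn unfolding cgd by simp
          also have "\<dots> = 1 + 2 * alpha * sqrt ?s" using spos by (simp add: field_simps real_div_sqrt)
          finally have "norm ((cg\<^sup>2 - alpha^2) *\<^sub>R sg t) = 1 + 2 * alpha * sqrt ?s" .
          hence "norm (rz t) \<le> 1 + 2 * alpha * sqrt ?s + kM * max Fb 0"
            unfolding rz_eq using norm_triangle_ineq[of "(cg\<^sup>2 - alpha^2) *\<^sub>R sg t" "Minv *v f' t"] fM by linarith
          thus ?thesis using n1 by (simp add: k0_def)
        qed
        show "dzeta t = A *v zeta t + E *v sg t \<and>
          norm (rs t) \<le> kr * sqrt (norm (sg t)) \<and> norm (rz t) \<le> k0 + 2 * alpha * sqrt (norm (sg t))"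
          using ode rsz by blast
      qed
      define Y where "Y t = (zeta t, vcat (alpha *\<^sub>R sg t) (z t))" for t
      define dY where "dY t = (dzeta t, vcat (alpha *\<^sub>R dsg t) (dz t))" for t
      define q where "q p = (S *v fst p, (1/alpha) *\<^sub>R (P *v snd p))" for p :: "(real^'r) \<times> (real^('n+'n))"
      have YqY: "\<And>t. Y t \<bullet> q (Y t) = Lf (zeta t) (vcat (alpha *\<^sub>R sg t) (z t))"
        by (simp add: Y_def q_def Lf_def)
      have "\<exists>t\<ge>0. Y t \<bullet> q (Y t) \<le> c"
      proof (rule decrease_lemma[of q dY Y N c])
        show "bounded_linear q"
          unfolding q_def
          by (intro bounded_linear_Pair bounded_linear_compose[OF matrix_vector_mul_bounded_linear bounded_linear_fst]
               bounded_linear_compose[OF bounded_linear_scaleR_right bounded_linear_compose[OF matrix_vector_mul_bounded_linear bounded_linear_snd]])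
        show "\<And>a b. a \<bullet> q b = b \<bullet> q a"
        proof -
          fix a b :: "(real^'r) \<times> (real^('n+'n))"
          have "fst a \<bullet> (S *v fst b) = fst b \<bullet> (S *v fst a)" by (metis sym_dot[OF Ssym] inner_commute)
          moreover have "snd a \<bullet> (P *v snd b) = snd b \<bullet> (P *v snd a)" by (metis sym_dot[OF Psym] inner_commute)
          ultimately show "a \<bullet> q b = b \<bullet> q a"
            by (cases a, cases b) (simp add: q_def)
        qed
        show "\<And>a. 0 \<le> a \<bullet> q a"
        proof -
          fix a :: "(real^'r) \<times> (real^('n+'n))"
          have "0 \<le> fst a \<bullet> (S *v fst a)" by (rule pos_def_ge[OF S_pos])
          moreover have "0 \<le> snd a \<bullet> (P *v snd a)" by (rule pos_def_ge[OF P_pos])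
          ultimately show "0 \<le> a \<bullet> q a" using alpha_pos by (cases a) (simp add: q_def)
        qed
        show "\<And>t. t \<ge> 0 \<Longrightarrow> (dY has_integral (Y t - Y 0)) {0..t}"
        proof -
          fix t :: real assume t0: "t \<ge> 0"
          have H1t: "dzeta absolutely_integrable_on {0..t} \<and>
              dsg absolutely_integrable_on {0..t} \<and>
              deta absolutely_integrable_on {0..t} \<and>
              zeta t = zeta 0 + integral {0..t} dzeta \<and>
              sg t = sg 0 + integral {0..t} dsg \<and>
              eta t = eta 0 + integral {0..t} deta" using H1 t0 by blast
          have hzeta: "(dzeta has_integral (zeta t - zeta 0)) {0..t}"
            using H1t absolutely_integrable_on_def[where f=dzeta and S="{0..t}"]
            by (metis add_diff_cancel_left' integrable_integral)
          have hsg: "(dsg has_integral (sg t - sg 0)) {0..t}"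
            using H1t absolutely_integrable_on_def[where f=dsg and S="{0..t}"]
            by (metis add_diff_cancel_left' integrable_integral)
          have heta: "(deta has_integral (eta t - eta 0)) {0..t}"
            using H1t absolutely_integrable_on_def[where f=deta and S="{0..t}"]
            by (metis add_diff_cancel_left' integrable_integral)
          have hf: "(f' has_integral (f t - f 0)) {0..t}"
          proof (rule fundamental_theorem_of_calculus[OF t0])
            fix x assume "x \<in> {0..t}"
            hence "(f has_vector_derivative f' x) (at x within {0..})" using f_deriv by auto
            thus "(f has_vector_derivative f' x) (at x within {0..t})"
              by (rule has_vector_derivative_within_subset) auto
          qed
          have hMf: "((\<lambda>x. Minv *v f' x) has_integral (Minv *v (f t - f 0))) {0..t}"
            using has_integral_linear[OF hf matrix_vector_mul_bounded_linear[of Minv]] by (simp add: o_def)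
          have hdz: "(dz has_integral (z t - z 0)) {0..t}"
          proof -
            have "((\<lambda>x. deta x + Minv *v f' x) has_integral ((eta t - eta 0) + Minv *v (f t - f 0))) {0..t}"
              by (rule has_integral_add[OF heta hMf])
            moreover have "(eta t - eta 0) + Minv *v (f t - f 0) = z t - z 0"
              by (simp add: z_def matrix_vector_mult_diff_distrib algebra_simps)
            ultimately show ?thesis by (simp add: dz_def[abs_def])
          qed
          have hxi: "((\<lambda>x. vcat (alpha *\<^sub>R dsg x) (dz x)) has_integral vcat (alpha *\<^sub>R (sg t - sg 0)) (z t - z 0)) {0..t}"
            by (rule has_integral_vcat[OF has_integral_cmul[OF hsg] hdz])
          have "(dY has_integral (zeta t - zeta 0, vcat (alpha *\<^sub>R (sg t - sg 0)) (z t - z 0))) {0..t}"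
            unfolding dY_def[abs_def] by (rule has_integral_pair[OF hzeta hxi])
          moreover have "(zeta t - zeta 0, vcat (alpha *\<^sub>R (sg t - sg 0)) (z t - z 0)) = Y t - Y 0"
            by (simp add: Y_def vcat_diff scaleR_diff_right)
          ultimately show "(dY has_integral (Y t - Y 0)) {0..t}" by simp
        qed
        show "negligible N" by (rule negl)
        show "\<And>Bd. \<exists>M. \<forall>t. t \<ge> 0 \<longrightarrow> t \<notin> N \<longrightarrow> norm (Y t) \<le> Bd \<longrightarrow> norm (dY t) \<le> M"
        proof -
          fix Bd :: real
          define Bp where "Bp = max Bd 0"
          define sB where "sB = sqrt (Bp / alpha)"
          define kA where "kA = onorm ((*v) A)"
          define kE where "kE = onorm ((*v) E)"
          define kC where "kC = onorm ((*v) (C0 C B K0))"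
          define kD where "kD = onorm ((*v) D)"
          define kK where "kK = onorm ((*v) (B ** K2))"
          have kn: "kA \<ge> 0" "kE \<ge> 0" "kC \<ge> 0" "kD \<ge> 0" "kK \<ge> 0"
            by (simp_all add: kA_def kE_def kC_def kD_def kK_def onorm_nn)
          define M where "M = kA*Bp + kE*(Bp/alpha) + alpha*(kC*Bp + kD*(Bp/alpha) + alpha*kr*(Bp/alpha) + kK*Bp + kr* sB)
               + (alpha^2*(Bp/alpha) + k0 + 2*alpha* sB)"
          show "\<exists>M. \<forall>t. t \<ge> 0 \<longrightarrow> t \<notin> N \<longrightarrow> norm (Y t) \<le> Bd \<longrightarrow> norm (dY t) \<le> M"
          proof (intro exI[of _ M] allI impI)
            fix t :: real assume t0: "t \<ge> 0" and tN: "t \<notin> N" and nY: "norm (Y t) \<le> Bd"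
            note pt = PT[OF t0 tN]
            define xi where "xi = vcat (alpha *\<^sub>R sg t) (z t)"
            have nY': "norm (Y t) \<le> Bp" using nY by (simp add: Bp_def)
            have zb: "norm (zeta t) \<le> Bp" using norm_fst_le[of "zeta t" xi] nY' by (simp add: Y_def xi_def)
            have xib: "norm xi \<le> Bp" using norm_snd_le[of xi "zeta t"] nY' by (simp add: Y_def xi_def)
            have zzb: "norm (z t) \<le> Bp" using norm_rgt_le[of "z t" "alpha *\<^sub>R sg t"] xib by (simp add: xi_def)
            have sb: "norm (sg t) \<le> Bp / alpha"
              using norm_lft_le[of "alpha *\<^sub>R sg t" "z t"] xib alpha_pos by (simp add: xi_def field_simps)
            have ssb: "sqrt (norm (sg t)) \<le> sB" unfolding sB_def using sb by (rule real_sqrt_le_mono)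
            have dzeq: "dzeta t = A *v zeta t + E *v sg t" using pt by blast
            have ds_eq: "dsg t = C0 C B K0 *v zeta t + D *v sg t + alpha *\<^sub>R ((B ** K1) *v sg t) + (B ** K2) *v z t + rs t"
              by (simp add: rs_def mv_assoc)
            have dz2: "dz t = alpha^2 *\<^sub>R sg t + rz t" by (simp add: rz_def)
            have b1: "norm (dzeta t) \<le> kA*Bp + kE*(Bp/alpha)"
            proof -
              have "norm (dzeta t) \<le> norm (A *v zeta t) + norm (E *v sg t)" unfolding dzeq by (rule norm_triangle_ineq)
              also have "\<dots> \<le> kA * norm (zeta t) + kE * norm (sg t)" unfolding kA_def kE_def by (intro add_mono mvb)
              also have "\<dots> \<le> kA*Bp + kE*(Bp/alpha)" using zb sb kn by (intro add_mono mult_left_mono) auto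
              finally show ?thesis .
            qed
            have b2: "norm (dsg t) \<le> kC*Bp + kD*(Bp/alpha) + alpha*kr*(Bp/alpha) + kK*Bp + kr* sB"
            proof -
              have "norm (dsg t) \<le> norm (C0 C B K0 *v zeta t) + norm (D *v sg t) + norm (alpha *\<^sub>R ((B ** K1) *v sg t))
                   + norm ((B ** K2) *v z t) + norm (rs t)"
                unfolding ds_eq by (rule norm5)
              also have "\<dots> \<le> kC * norm (zeta t) + kD * norm (sg t) + alpha * (kr * norm (sg t)) + kK * norm (z t) + kr * sqrt (norm (sg t))"
                using alpha_pos pt unfolding kC_def kD_def kK_def kr_def by (intro add_mono mvb mult_left_mono) (auto intro: mvb)
              also have "\<dots> \<le> kC*Bp + kD*(Bp/alpha) + alpha*(kr*(Bp/alpha)) + kK*Bp + kr* sB"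
                using zb sb zzb ssb kn kPn alpha_pos by (intro add_mono mult_left_mono) auto
              finally show ?thesis by (simp add: mult.assoc)
            qed
            have b3: "norm (dz t) \<le> alpha^2*(Bp/alpha) + k0 + 2*alpha* sB"
            proof -
              have "norm (dz t) \<le> norm (alpha^2 *\<^sub>R sg t) + norm (rz t)" unfolding dz2 by (rule norm_triangle_ineq)
              also have "\<dots> \<le> alpha^2 * norm (sg t) + (k0 + 2 * alpha * sqrt (norm (sg t)))" using pt by simp
              also have "\<dots> \<le> alpha^2*(Bp/alpha) + (k0 + 2*alpha* sB)"
                using sb ssb alpha_pos by (intro add_mono mult_left_mono add_left_mono) auto
              finally show ?thesis by simp
            qed
            have "norm (dY t) \<le> norm (dzeta t) + norm (vcat (alpha *\<^sub>R dsg t) (dz t))"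
              unfolding dY_def by (rule norm_Pair_le)
            also have "\<dots> \<le> norm (dzeta t) + (alpha * norm (dsg t) + norm (dz t))"
              using norm_vcat_le[of "alpha *\<^sub>R dsg t" "dz t"] alpha_pos by simp
            also have "\<dots> \<le> M" unfolding M_def
              using b1 b3 mult_left_mono[OF b2, of alpha] alpha_pos by linarith
            finally show "norm (dY t) \<le> M" .
          qed
        qed
        show "\<And>t. t \<ge> 0 \<Longrightarrow> t \<notin> N \<Longrightarrow> c < Y t \<bullet> q (Y t) \<Longrightarrow> 2 * (dY t \<bullet> q (Y t)) \<le> -1"
        proof -
          fix t :: real assume t0: "t \<ge> 0" and tN: "t \<notin> N" and cL: "c < Y t \<bullet> q (Y t)"
          note pt = PT[OF t0 tN]
          define xi where "xi = vcat (alpha *\<^sub>R sg t) (z t)"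
          define v where "v = vcat (alpha *\<^sub>R rs t) (rz t)"
          define n where "n = norm (Y t)"
          define sn where "sn = sqrt n"
          have dzeq: "dzeta t = A *v zeta t + E *v sg t" using pt by blast
          have ds_eq: "dsg t = C0 C B K0 *v zeta t + D *v sg t + alpha *\<^sub>R (B *v (K1 *v sg t)) + B *v (K2 *v z t) + rs t"
            by (simp add: rs_def)
          have dz2: "dz t = alpha^2 *\<^sub>R sg t + rz t" by (simp add: rz_def)
          have pw: "2*(dzeta t \<bullet> (S*v zeta t)) + (2/alpha)*(vcat (alpha *\<^sub>R dsg t) (dz t) \<bullet> (P *v xi))
             \<le> -e*(norm (zeta t)^2 + norm xi^2) + (2/alpha)*(v \<bullet> (P *v xi))"
            unfolding xi_def v_def by (rule ptwise[OF Ssym Psym alpha_pos zp(3) zp(4) L1 L2 L3 dzeq ds_eq dz2])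
          have dq: "2*(dY t \<bullet> q (Y t)) = 2*(dzeta t \<bullet> (S*v zeta t)) + (2/alpha)*(vcat (alpha *\<^sub>R dsg t) (dz t) \<bullet> (P *v xi))"
            by (simp add: dY_def Y_def q_def xi_def)
          have nsq: "n^2 = norm (zeta t)^2 + norm xi^2" by (simp add: n_def Y_def xi_def norm_Pair)
          have nn: "n \<ge> 0" by (simp add: n_def)
          have xin: "norm xi \<le> n" unfolding n_def Y_def xi_def by (rule norm_snd_le)
          have sig: "alpha * norm (sg t) \<le> n"
            using norm_lft_le[of "alpha *\<^sub>R sg t" "z t"] xin alpha_pos by (simp add: xi_def)
          have ssq: "sqrt (norm (sg t)) \<le> sn / sqrt alpha"
          proof -
            have "norm (sg t) \<le> n / alpha" using sig alpha_pos by (simp add: field_simps)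
            hence "sqrt (norm (sg t)) \<le> sqrt (n / alpha)" by (rule real_sqrt_le_mono)
            thus ?thesis by (simp add: sn_def real_sqrt_divide)
          qed
          have w1: "norm v \<le> k0 + alpha * (kr + 2) * (sn / sqrt alpha)"
          proof -
            have "norm v \<le> norm (alpha *\<^sub>R rs t) + norm (rz t)" unfolding v_def by (rule norm_vcat_le)
            also have "\<dots> = alpha * norm (rs t) + norm (rz t)" using alpha_pos by simp
            also have "\<dots> \<le> alpha * (kr * sqrt (norm (sg t))) + (k0 + 2 * alpha * sqrt (norm (sg t)))"
              using pt alpha_pos by (intro add_mono mult_left_mono) auto
            also have "\<dots> = k0 + alpha * (kr + 2) * sqrt (norm (sg t))" by (simp add: algebra_simps)
            also have "\<dots> \<le> k0 + alpha * (kr + 2) * (sn / sqrt alpha)"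
              using ssq alpha_pos kPn by (intro add_left_mono mult_left_mono) auto
            finally show ?thesis .
          qed
          have w2: "norm (P *v xi) \<le> kP * n"
          proof -
            have "norm (P *v xi) \<le> kP * norm xi" unfolding kP_def by (rule mvb)
            also have "\<dots> \<le> kP * n" using xin kPn by (intro mult_left_mono) auto
            finally show ?thesis .
          qed
          have snn: "sn \<ge> 0" by (simp add: sn_def n_def)
          have w0: "0 \<le> k0 + alpha * (kr + 2) * (sn / sqrt alpha)"
            using k0n alpha_pos kPn snn by (intro add_nonneg_nonneg mult_nonneg_nonneg divide_nonneg_nonneg) auto
          have R1b: "(2/alpha)*(v \<bullet> (P *v xi)) \<le> a0 * n + a1 * (n * sn)"
          proof -
            have "v \<bullet> (P *v xi) \<le> norm v * norm (P *v xi)" by (rule norm_cauchy_schwarz)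
            also have "\<dots> \<le> (k0 + alpha * (kr + 2) * (sn / sqrt alpha)) * (kP * n)"
              using w1 w2 w0 by (intro mult_mono) auto
            finally have "(2/alpha)*(v \<bullet> (P *v xi)) \<le> (2/alpha) * ((k0 + alpha * (kr + 2) * (sn / sqrt alpha)) * (kP * n))"
              using alpha_pos by (intro mult_left_mono) auto
            also have "\<dots> = a0 * n + a1 * (n * sn)"
              using alpha_pos by (simp add: a0_def a1_def field_simps)
            finally show ?thesis .
          qed
          have nR: "n \<ge> R"
          proof (rule ccontr)
            assume "\<not> n \<ge> R"
            hence "n < R" by simp
            hence "n^2 \<le> R^2" using nn by (intro power_mono) auto
            have "c < Lf (zeta t) xi" using cL YqY[of t] by (simp add: xi_def)
            also have "\<dots> \<le> lam * n^2" unfolding nsq by (rule Lf_up)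
            also have "\<dots> \<le> lam * R^2" using \<open>n^2 \<le> R^2\<close> lamn by (intro mult_left_mono) auto
            also have "\<dots> \<le> c" unfolding c_def using lamn
              by (simp add: algebra_simps add_nonneg_nonneg)
            finally show False by simp
          qed
          have n1: "n \<ge> 1" using nR R1 by linarith
          have sn1: "sn \<ge> 1" unfolding sn_def using n1 by simp
          have snsn: "sn * sn = n" unfolding sn_def using nn by simp
          have snR: "(a0 + a1 + 1) / e \<le> sn"
          proof -
            have "(a0 + a1 + 1) / e = sqrt (((a0 + a1 + 1) / e)^2)" using a01 epos by simp
            also have "\<dots> \<le> sqrt R" by (rule real_sqrt_le_mono) (simp add: R_def)
            also have "\<dots> \<le> sn" unfolding sn_def using nR by (rule real_sqrt_le_mono)
            finally show ?thesis .
          qed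
          have K: "a0 + a1 + 1 \<le> e * sn" using snR epos by (simp add: field_simps)
          have nsn: "n \<le> n * sn" using sn1 nn by (simp add: mult_le_cancel_left1)
          have "a0 * n \<le> a0 * (n * sn)" using nsn a01 by (intro mult_left_mono) auto
          moreover have "1 \<le> n * sn" using nsn n1 by linarith
          moreover have "(a0 + a1 + 1) * (n * sn) \<le> (e * sn) * (n * sn)" using K nn sn1 by (intro mult_right_mono) auto
          moreover have "(e * sn) * (n * sn) = e * n^2" using snsn by (simp add: power2_eq_square mult_ac)
          moreover have "(a0 + a1 + 1) * (n * sn) = a0 * (n * sn) + a1 * (n * sn) + n * sn" by (simp add: algebra_simps)
          ultimately have fin: "a0 * n + a1 * (n * sn) + 1 \<le> e * n^2" by linarith
          have "2 * (dY t \<bullet> q (Y t)) \<le> -e*(norm (zeta t)^2 + norm xi^2) + (2/alpha)*(v \<bullet> (P *v xi))"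
            using dq pw by simp
          also have "\<dots> = -e * n^2 + (2/alpha)*(v \<bullet> (P *v xi))" using nsq by simp
          finally show "2 * (dY t \<bullet> q (Y t)) \<le> -1" using R1b fin by linarith
        qed
      qed
      then obtain T where T: "T \<ge> 0" "Lf (zeta T) (vcat (alpha *\<^sub>R sg T) (z T)) \<le> c"
        unfolding YqY by blast
      have "(zeta T, vcat (sg T) (eta T + matrix_inv (B ** K2) *v f T)) \<in> X"
        using T(2) by (simp add: X_def Yof_def z_def Minv_def)
      thus "\<exists>T\<ge>0. (zeta T, vcat (sg T) (eta T + matrix_inv (B ** K2) *v f T)) \<in> X" using T(1) by blast
    qed
  qed
qed

end
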